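(* Let $A,B\in\mathbb{M}_k$ be positive definite matrices and let $\Phi:\mathbb{M}_k\to\mathbb{M}_n$ be a unital positive linear map. Then $\mathrm{Tr}\big[\Phi((A+B)^p)^{-1/p}\big]\le\mathrm{Tr}\big[\Phi(A^p)^{-1/p}\big]+\mathrm{Tr}\big[\Phi(B^p)^{-1/p}\big]$ for all $p\in[-1,1]\setminus\{0\}$.
   Context: $\mathbb{M}_n$ denotes $n\times n$ complex matrices, $\mathrm{Tr}$ the trace. Positive linear maps preserve positive semidefiniteness; unital means $\Phi(I)=I$. *)

theory Defs
  imports Complex_Main "Jordan_Normal_Form.Matrix"
begin

text \<open>Matrices in M_n are complex matrices in carrier_mat n n.\<close>

definition cadj :: "complex mat \<Rightarrow> complex mat" where
  "cadj A = mat (dim_col A) (dim_row A) (\<lambda>(i,j). cnj (A $$ (j,i)))"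

definition mtrace :: "complex mat \<Rightarrow> complex" where
  "mtrace A = (\<Sum>i<dim_row A. A $$ (i,i))"

definition hermitian :: "nat \<Rightarrow> complex mat \<Rightarrow> bool" where
  "hermitian n A \<longleftrightarrow> A \<in> carrier_mat n n \<and> cadj A = A"

definition qform :: "complex mat \<Rightarrow> complex vec \<Rightarrow> complex" where
  "qform A v = (\<Sum>i<dim_vec v. (A *\<^sub>v v) $ i * cnj (v $ i))"

definition pos_semidef :: "nat \<Rightarrow> complex mat \<Rightarrow> bool" where
  "pos_semidef n A \<longleftrightarrow> hermitian n A \<and>
     (\<forall>v \<in> carrier_vec n. 0 \<le> Re (qform A v))"

definition pos_def :: "nat \<Rightarrow> complex mat \<Rightarrow> bool" where
  "pos_def n A \<longleftrightarrow> hermitian n A \<and>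
     (\<forall>v \<in> carrier_vec n. v \<noteq> 0\<^sub>v n \<longrightarrow> 0 < Re (qform A v))"

definition unitary :: "nat \<Rightarrow> complex mat \<Rightarrow> bool" where
  "unitary n U \<longleftrightarrow> U \<in> carrier_mat n n \<and> cadj U * U = 1\<^sub>m n"

definition spectral_decomp :: "nat \<Rightarrow> complex mat \<Rightarrow> complex mat \<Rightarrow> (nat \<Rightarrow> real) \<Rightarrow> bool" where
  "spectral_decomp n A U d \<longleftrightarrow> unitary n U \<and>
     A = U * mat_diag n (\<lambda>i. complex_of_real (d i)) * cadj U"

text \<open>Real power A^p of a (positive definite) Hermitian matrix via the functional calculus:
  A^p = U diag(d_i powr p) U^*, for any spectral decomposition (the result does not depend on it).\<close>
definition mat_powr :: "complex mat \<Rightarrow> real \<Rightarrow> complex mat" where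
  "mat_powr A p = (let n = dim_row A; (U, d) = (SOME (U, d). spectral_decomp n A U d)
     in U * mat_diag n (\<lambda>i. complex_of_real (d i powr p)) * cadj U)"

definition linear_map_mat :: "nat \<Rightarrow> nat \<Rightarrow> (complex mat \<Rightarrow> complex mat) \<Rightarrow> bool" where
  "linear_map_mat k n \<Phi> \<longleftrightarrow>
     (\<forall>X \<in> carrier_mat k k. \<Phi> X \<in> carrier_mat n n) \<and>
     (\<forall>X \<in> carrier_mat k k. \<forall>Y \<in> carrier_mat k k. \<Phi> (X + Y) = \<Phi> X + \<Phi> Y) \<and>
     (\<forall>c. \<forall>X \<in> carrier_mat k k. \<Phi> (c \<cdot>\<^sub>m X) = c \<cdot>\<^sub>m \<Phi> X)"

definition positive_map :: "nat \<Rightarrow> nat \<Rightarrow> (complex mat \<Rightarrow> complex mat) \<Rightarrow> bool" where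
  "positive_map k n \<Phi> \<longleftrightarrow> (\<forall>X. pos_semidef k X \<longrightarrow> pos_semidef n (\<Phi> X))"

definition unital_map :: "nat \<Rightarrow> nat \<Rightarrow> (complex mat \<Rightarrow> complex mat) \<Rightarrow> bool" where
  "unital_map k n \<Phi> \<longleftrightarrow> \<Phi> (1\<^sub>m k) = 1\<^sub>m n"

end

theory Submission imports Defs "Jordan_Normal_Form.Spectral_Radius" "HOL-Analysis.Analysis" begin
unbundle no vec_syntax
hide_const (open) Finite_Cartesian_Product.vec Finite_Cartesian_Product.vec_nth Finite_Cartesian_Product.mat Finite_Cartesian_Product.row Finite_Cartesian_Product.column
hide_type (open) Finite_Cartesian_Product.vec

lemma cadj_carrier[simp]: "dim_row (cadj A) = dim_col A" "dim_col (cadj A) = dim_row A"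
  by (auto simp: cadj_def)

lemma cadj_index[simp]: "i < dim_col A \<Longrightarrow> j < dim_row A \<Longrightarrow> cadj A $$ (i,j) = cnj (A $$ (j,i))"
  by (auto simp: cadj_def)

lemma cadj_carrier_mat[simp]: "A \<in> carrier_mat n m \<Longrightarrow> cadj A \<in> carrier_mat m n"
  by (auto simp: cadj_def)

lemma unitary_right:
  assumes "unitary n U" shows "U * cadj U = 1\<^sub>m n"
proof -
  have U: "U \<in> carrier_mat n n" and h: "cadj U * U = 1\<^sub>m n" using assms by (auto simp: unitary_def)
  have "cadj U \<in> carrier_mat n n" using U by simp
  then show ?thesis using mat_mult_left_right_inverse[OF _ U h] by blast
qed

lemma unitary_col_sum:
  assumes "unitary n U" "i < n" "j < n"
  shows "(\<Sum>k<n. cnj (U $$ (k,i)) * U $$ (k,j)) = (if i = j then 1 else 0)"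
proof -
  have U: "U \<in> carrier_mat n n" and h: "cadj U * U = 1\<^sub>m n" using assms by (auto simp: unitary_def)
  have "(cadj U * U) $$ (i,j) = (\<Sum>k<n. cnj (U $$ (k,i)) * U $$ (k,j))"
    using U assms by (auto simp: scalar_prod_def atLeast0LessThan)
  then show ?thesis using h assms by simp
qed

lemma unitary_row_sum:
  assumes "unitary n U" "i < n" "j < n"
  shows "(\<Sum>k<n. U $$ (i,k) * cnj (U $$ (j,k))) = (if i = j then 1 else 0)"
proof -
  have U: "U \<in> carrier_mat n n" using assms by (auto simp: unitary_def)
  have h: "U * cadj U = 1\<^sub>m n" using unitary_right[OF assms(1)] .
  have "(U * cadj U) $$ (i,j) = (\<Sum>k<n. U $$ (i,k) * cnj (U $$ (j,k)))"
    using U assms by (auto simp: scalar_prod_def atLeast0LessThan)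
  then show ?thesis using h assms by simp
qed

definition coef :: "nat \<Rightarrow> complex mat \<Rightarrow> complex vec \<Rightarrow> nat \<Rightarrow> complex" where
  "coef n U v j = (\<Sum>k<n. cnj (U $$ (k,j)) * v $ k)"

lemma UDU_index:
  assumes U: "U \<in> carrier_mat n n" and i: "i < n" and k: "k < n"
  shows "(U * mat_diag n f * cadj U) $$ (i,k) = (\<Sum>j<n. U $$ (i,j) * f j * cnj (U $$ (k,j)))"
proof -
  have "U * mat_diag n f = Matrix.mat n n (\<lambda>(i,j). U $$ (i,j) * f j)"
    using mat_diag_mult_right[OF U] .
  then show ?thesis using U i k by (auto simp: scalar_prod_def atLeast0LessThan)
qed

lemma UDU_carrier: "U \<in> carrier_mat n n \<Longrightarrow> U * mat_diag n f * cadj U \<in> carrier_mat n n"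
  by auto

lemma qform_UDU:
  assumes U: "U \<in> carrier_mat n n" and v: "v \<in> carrier_vec n"
  shows "qform (U * mat_diag n f * cadj U) v = (\<Sum>j<n. f j * complex_of_real ((cmod (coef n U v j))\<^sup>2))"
proof -
  let ?M = "U * mat_diag n f * cadj U"
  have M: "?M \<in> carrier_mat n n" using U by auto
  have dv: "dim_vec v = n" using v by auto
  have "qform ?M v = (\<Sum>i<n. (\<Sum>k<n. ?M $$ (i,k) * v $ k) * cnj (v $ i))"
    unfolding qform_def dv using M v by (auto simp: scalar_prod_def atLeast0LessThan intro!: sum.cong)
  also have "\<dots> = (\<Sum>i<n. \<Sum>k<n. \<Sum>j<n. U $$ (i,j) * f j * cnj (U $$ (k,j)) * v $ k * cnj (v $ i))"
    by (simp add: UDU_index[OF U] sum_distrib_right)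
  also have "\<dots> = (\<Sum>j<n. f j * ((\<Sum>k<n. cnj (U $$ (k,j)) * v $ k) * (\<Sum>i<n. U $$ (i,j) * cnj (v $ i))))"
  proof -
    have "(\<Sum>i<n. \<Sum>k<n. \<Sum>j<n. U $$ (i,j) * f j * cnj (U $$ (k,j)) * v $ k * cnj (v $ i))
       = (\<Sum>i<n. \<Sum>j<n. \<Sum>k<n. U $$ (i,j) * f j * cnj (U $$ (k,j)) * v $ k * cnj (v $ i))"
      by (rule sum.cong[OF refl], rule sum.swap)
    also have "\<dots> = (\<Sum>j<n. \<Sum>i<n. \<Sum>k<n. U $$ (i,j) * f j * cnj (U $$ (k,j)) * v $ k * cnj (v $ i))"
      by (rule sum.swap)
    also have "\<dots> = (\<Sum>j<n. f j * ((\<Sum>k<n. cnj (U $$ (k,j)) * v $ k) * (\<Sum>i<n. U $$ (i,j) * cnj (v $ i))))"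
      by (rule sum.cong[OF refl], subst sum_product, subst sum.swap, simp add: sum_distrib_left algebra_simps)
    finally show ?thesis .
  qed
  also have "\<dots> = (\<Sum>j<n. f j * complex_of_real ((cmod (coef n U v j))\<^sup>2))"
  proof (rule sum.cong, simp)
    fix j
    have "(\<Sum>i<n. U $$ (i,j) * cnj (v $ i)) = cnj (coef n U v j)"
      by (simp add: coef_def)
    then show "f j * ((\<Sum>k<n. cnj (U $$ (k,j)) * v $ k) * (\<Sum>i<n. U $$ (i,j) * cnj (v $ i))) =
      f j * complex_of_real ((cmod (coef n U v j))\<^sup>2)"
      using complex_norm_square[of "coef n U v j"] by (simp add: coef_def[symmetric] del: of_real_power)
  qed
  finally show ?thesis .
qed

lemma coef_inner:
  assumes U: "unitary n U"
  shows "(\<Sum>j<n. coef n U v j * cnj (coef n U w j)) = (\<Sum>k<n. v $ k * cnj (w $ k))"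
proof -
  have "(\<Sum>j<n. coef n U v j * cnj (coef n U w j))
      = (\<Sum>j<n. \<Sum>l<n. \<Sum>k<n. v $ k * (cnj (w $ l) * (U $$ (l,j) * cnj (U $$ (k,j)))))"
    by (simp add: coef_def sum_product sum_distrib_left algebra_simps)
  also have "\<dots> = (\<Sum>l<n. \<Sum>j<n. \<Sum>k<n. v $ k * (cnj (w $ l) * (U $$ (l,j) * cnj (U $$ (k,j)))))"
    by (rule sum.swap)
  also have "\<dots> = (\<Sum>l<n. \<Sum>k<n. \<Sum>j<n. v $ k * (cnj (w $ l) * (U $$ (l,j) * cnj (U $$ (k,j)))))"
    by (rule sum.cong[OF refl], rule sum.swap)
  also have "\<dots> = (\<Sum>l<n. \<Sum>k<n. v $ k * cnj (w $ l) * (if l = k then 1 else 0))"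
    by (auto simp: sum_distrib_left[symmetric] unitary_row_sum[OF U] mult.assoc intro!: sum.cong)
  also have "\<dots> = (\<Sum>k<n. v $ k * cnj (w $ k))"
    by (simp add: if_distrib cong: if_cong)
  finally show ?thesis .
qed

lemma coef_norm:
  assumes U: "unitary n U"
  shows "(\<Sum>j<n. (cmod (coef n U v j))\<^sup>2) = (\<Sum>k<n. (cmod (v $ k))\<^sup>2)"
proof -
  have "complex_of_real (\<Sum>j<n. (cmod (coef n U v j))\<^sup>2) = complex_of_real (\<Sum>k<n. (cmod (v $ k))\<^sup>2)"
    using coef_inner[OF U, of v v] by (simp add: complex_norm_square del: of_real_power)
  then show ?thesis using of_real_eq_iff by blast
qed

lemma coef_col_self:
  assumes U: "unitary n U" and i: "i < n" and j: "j < n"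
  shows "coef n U (col U i) j = (if i = j then 1 else 0)"
proof -
  have Uc: "U \<in> carrier_mat n n" using U by (auto simp: unitary_def)
  have "coef n U (col U i) j = (\<Sum>k<n. cnj (U $$ (k,j)) * U $$ (k,i))"
    unfolding coef_def using Uc i by (auto intro!: sum.cong)
  also have "\<dots> = (if j = i then 1 else 0)" using unitary_col_sum[OF U j i] .
  finally show ?thesis by auto
qed

lemma coef_col_swap:
  assumes U: "U \<in> carrier_mat n n" and V: "V \<in> carrier_mat n n" and i: "i < n" and j: "j < n"
  shows "coef n U (col V i) j = cnj (coef n V (col U j) i)"
  unfolding coef_def using U V i j by (auto intro!: sum.cong simp: mult.commute)

lemma mtrace_UDU:
  assumes U: "unitary n U"
  shows "mtrace (U * mat_diag n f * cadj U) = (\<Sum>j<n. f j)"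
proof -
  have Uc: "U \<in> carrier_mat n n" using U by (auto simp: unitary_def)
  have d1: "dim_row U = n" using Uc by auto
  have "mtrace (U * mat_diag n f * cadj U) = (\<Sum>i<n. \<Sum>j<n. U $$ (i,j) * f j * cnj (U $$ (i,j)))"
  proof -
    have dd: "dim_row (U * mat_diag n f * cadj U) = n" using Uc by simp
    show ?thesis unfolding mtrace_def dd by (rule sum.cong[OF refl], rule UDU_index[OF Uc], auto)
  qed
  also have "\<dots> = (\<Sum>j<n. f j * (\<Sum>i<n. cnj (U $$ (i,j)) * U $$ (i,j)))"
    by (subst sum.swap) (auto simp: sum_distrib_left algebra_simps intro!: sum.cong)
  also have "\<dots> = (\<Sum>j<n. f j)"
    by (auto simp: unitary_col_sum[OF U] intro!: sum.cong)
  finally show ?thesis .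
qed

section \<open>Spectral theorem\<close>

lemma cadj_mult:
  assumes "A \<in> carrier_mat n k" "B \<in> carrier_mat k m"
  shows "cadj (A * B) = cadj B * cadj A"
  using assms by (intro eq_matI) (auto simp: scalar_prod_def cadj_def mult.commute)

lemma cadj_cadj[simp]: "cadj (cadj A) = A"
  by (intro eq_matI) (auto simp: cadj_def)

lemma compress_index:
  assumes W: "W \<in> carrier_mat n n" and X: "X \<in> carrier_mat n n" and i: "i < n" and j: "j < n"
  shows "(cadj W * X * W) $$ (i,j) = (\<Sum>k<n. cnj (W $$ (k,i)) * (X *\<^sub>v col W j) $ k)"
proof -
  have "cadj W * X * W = cadj W * (X * W)" using W X by (intro assoc_mult_mat) auto
  moreover have "col (X * W) j = X *\<^sub>v col W j" using W X j by (intro col_mult2) auto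
  ultimately show ?thesis using W X i j
    by (auto simp: scalar_prod_def atLeast0LessThan simp del: col_mult2 intro!: sum.cong)
qed

lemma compress_eigen:
  assumes W: "unitary n W" and X: "X \<in> carrier_mat n n" and i: "i < n" and j: "j < n"
    and ev: "X *\<^sub>v col W j = \<mu> \<cdot>\<^sub>v col W j"
  shows "(cadj W * X * W) $$ (i,j) = (if i = j then \<mu> else 0)"
proof -
  have Wc: "W \<in> carrier_mat n n" using W by (auto simp: unitary_def)
  have "(cadj W * X * W) $$ (i,j) = (\<Sum>k<n. cnj (W $$ (k,i)) * (\<mu> * W $$ (k,j)))"
    unfolding compress_index[OF Wc X i j] ev using Wc j by (auto intro!: sum.cong)
  also have "\<dots> = \<mu> * (\<Sum>k<n. cnj (W $$ (k,i)) * W $$ (k,j))"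
    by (auto simp: sum_distrib_left algebra_simps)
  finally show ?thesis using unitary_col_sum[OF W i j] by auto
qed

lemma hermitian_compress:
  assumes X: "hermitian n X" and W: "W \<in> carrier_mat n n"
  shows "hermitian n (cadj W * X * W)"
proof -
  have Xc: "X \<in> carrier_mat n n" and Xh: "cadj X = X" using X by (auto simp: hermitian_def)
  have "cadj (cadj W * X * W) = cadj W * cadj (cadj W * X)"
    using Xc W by (intro cadj_mult[of _ n n]) auto
  also have "\<dots> = cadj W * (X * W)"
    using Xc W Xh by (subst cadj_mult[of _ n n]) auto
  also have "\<dots> = cadj W * X * W" using Xc W by (intro assoc_mult_mat[symmetric]) auto
  finally show ?thesis using Xc W unfolding hermitian_def by auto
qed

lemma hermitian_index:
  assumes "hermitian n Z" "i < n" "j < n"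
  shows "Z $$ (j,i) = cnj (Z $$ (i,j))"
proof -
  have "cadj Z = Z" "Z \<in> carrier_mat n n" using assms by (auto simp: hermitian_def)
  then have "Z $$ (j,i) = cadj Z $$ (j,i)" by simp
  also have "\<dots> = cnj (Z $$ (i,j))" using assms \<open>Z \<in> carrier_mat n n\<close> by auto
  finally show ?thesis .
qed

lemma sum_delta_left:
  assumes "(i::nat) < n" shows "(\<Sum>k<n. (if k = i then 1 else 0) * f k) = (f i :: 'a::comm_ring_1)"
proof -
  have "(\<Sum>k<n. (if k = i then 1 else 0) * f k) = (\<Sum>k<n. if k = i then f k else 0)"
    by (intro sum.cong) auto
  also have "\<dots> = f i" using assms by (subst sum.delta) auto
  finally show ?thesis .
qed

lemma householder_unitary:
  assumes w: "w \<in> carrier_vec n" and s: "(\<Sum>k<n. cnj (w $ k) * w $ k) = complex_of_real s"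
    and b: "\<beta> * \<beta> * s = 2 * \<beta>"
  shows "unitary n (Matrix.mat n n (\<lambda>(i,j). (if i = j then 1 else 0) - complex_of_real \<beta> * w $ i * cnj (w $ j)))"
    (is "unitary n ?H")
proof -
  have Hc: "?H \<in> carrier_mat n n" by auto
  have "cadj ?H * ?H = 1\<^sub>m n"
  proof (rule eq_matI)
    fix i j assume "i < dim_row (1\<^sub>m n :: complex mat)" "j < dim_col (1\<^sub>m n :: complex mat)"
    then have i: "i < n" and j: "j < n" by auto
    let ?b = "complex_of_real \<beta>"
    have "(cadj ?H * ?H) $$ (i,j) = (\<Sum>k<n. ((if k = i then 1 else 0) - ?b * cnj (w $ k) * w $ i) *
        ((if k = j then 1 else 0) - ?b * w $ k * cnj (w $ j)))"
      using i j by (auto simp: scalar_prod_def atLeast0LessThan intro!: sum.cong)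
    also have "\<dots> = (\<Sum>k<n. (if k = i then 1 else 0) * (if k = j then 1 else 0))
        - (\<Sum>k<n. (if k = i then 1 else 0) * (?b * w $ k * cnj (w $ j)))
        - (\<Sum>k<n. (if k = j then 1 else 0) * (?b * cnj (w $ k) * w $ i))
        + ?b * ?b * w $ i * cnj (w $ j) * (\<Sum>k<n. cnj (w $ k) * w $ k)"
      by (simp add: sum_subtractf sum.distrib sum_distrib_left algebra_simps)
    also have "\<dots> = (if i = j then 1 else 0) - ?b * w $ i * cnj (w $ j) - ?b * w $ i * cnj (w $ j)
        + ?b * ?b * w $ i * cnj (w $ j) * complex_of_real s"
      using i j by (simp only: s sum_delta_left) simp
    also have "\<dots> = (if i = j then 1 else 0)"
    proof -
      have "?b * ?b * complex_of_real s = 2 * ?b" using b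
        by (metis of_real_mult of_real_numeral)
      then show ?thesis by (simp add: algebra_simps) (metis (no_types, lifting) mult.assoc mult.commute)
    qed
    finally show "(cadj ?H * ?H) $$ (i,j) = 1\<^sub>m n $$ (i,j)" using i j by simp
  qed auto
  then show ?thesis using Hc unfolding unitary_def by auto
qed

lemma cnj_delta: "cnj (if P then 1 else 0) = (if P then 1 else 0)"
  by (cases P) auto

lemma cnj_mult_self: "cnj x * x = complex_of_real ((cmod x)\<^sup>2)"
  using complex_norm_square[of x] by (simp add: mult.commute del: of_real_power)

lemma householder_exists:
  assumes z: "z \<in> carrier_vec n" "z \<noteq> 0\<^sub>v n" and m: "m < n" and zm: "\<forall>i<m. z $ i = 0"
  shows "\<exists>H c. unitary n H \<and> (\<forall>j<m. col H j = unit_vec n j) \<and> c \<noteq> 0 \<and> col H m = c \<cdot>\<^sub>v z"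
proof -
  define N where "N = (\<Sum>i<n. (cmod (z $ i))\<^sup>2)"
  obtain i0 where i0: "i0 < n" "z $ i0 \<noteq> 0"
    using z by (metis eq_vecI carrier_vecD index_zero_vec(1) index_zero_vec(2))
  have "(cmod (z $ i0))\<^sup>2 \<le> N" unfolding N_def using i0
    by (intro member_le_sum) auto
  moreover have "(cmod (z $ i0))\<^sup>2 > 0" using i0 by auto
  ultimately have Npos: "N > 0" by linarith
  define r where "r = sqrt N"
  have rpos: "r > 0" using Npos r_def by auto
  have r2: "r * r = N" using Npos r_def by (simp add: real_sqrt_mult_self)
  define \<alpha> where "\<alpha> = (if z $ m = 0 then 1 else cnj (z $ m) / complex_of_real (cmod (z $ m)))"
  have \<alpha>1: "cmod \<alpha> = 1" unfolding \<alpha>_def by (auto simp: norm_divide)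
  have \<alpha>z: "\<alpha> * z $ m = complex_of_real (cmod (z $ m))"
  proof (cases "z $ m = 0")
    case False
    then have "\<alpha> * z $ m = cnj (z $ m) * z $ m / complex_of_real (cmod (z $ m))"
      unfolding \<alpha>_def by simp
    also have "\<dots> = complex_of_real ((cmod (z $ m))\<^sup>2) / complex_of_real (cmod (z $ m))"
      by (simp only: cnj_mult_self)
    also have "\<dots> = complex_of_real (cmod (z $ m))" using False
      by (simp add: power2_eq_square)
    finally show ?thesis .
  qed (simp add: \<alpha>_def)
  define c where "c = \<alpha> / complex_of_real r"
  have c0: "c \<noteq> 0" using \<alpha>1 rpos unfolding c_def by auto
  have cm: "cmod c * cmod c * N = 1" unfolding c_def using \<alpha>1 rpos r2 Npos
    by (simp add: norm_divide)
  define b where "b = c \<cdot>\<^sub>v z"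
  have bc: "b \<in> carrier_vec n" using z unfolding b_def by auto
  have bi: "\<And>i. i < n \<Longrightarrow> b $ i = c * z $ i" using z unfolding b_def by auto
  define t where "t = cmod (z $ m) / r"
  have bm: "b $ m = complex_of_real t" using bi[OF m] \<alpha>z unfolding c_def t_def
    by (simp add: field_simps)
  have bnorm: "(\<Sum>k<n. cnj (b $ k) * b $ k) = 1"
  proof -
    have "(\<Sum>k<n. cnj (b $ k) * b $ k) = (\<Sum>k<n. complex_of_real ((cmod c * cmod c) * (cmod (z $ k))\<^sup>2))"
      by (intro sum.cong refl, simp only: cnj_mult_self, simp add: bi norm_mult power_mult_distrib power2_eq_square)
    also have "\<dots> = complex_of_real ((cmod c * cmod c) * N)"
      unfolding N_def by (simp add: sum_distrib_left)
    finally show ?thesis using cm by simp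
  qed
  have bzero: "\<And>i. i < m \<Longrightarrow> b $ i = 0" using zm m bi by auto
  show ?thesis
  proof (cases "b = unit_vec n m")
    case True
    have U1: "unitary n (1\<^sub>m n)"
      unfolding unitary_def by (auto intro!: eq_matI simp: cadj_def)
    have "col (1\<^sub>m n) m = c \<cdot>\<^sub>v z" using True m unfolding b_def by simp
    then show ?thesis using U1 c0 m by (intro exI[of _ "1\<^sub>m n"] exI[of _ c]) auto
  next
    case False
    define w where "w = vec n (\<lambda>i. (if i = m then 1 else 0) - b $ i)"
    have wc: "w \<in> carrier_vec n" unfolding w_def by auto
    have wi: "\<And>i. i < n \<Longrightarrow> w $ i = (if i = m then 1 else 0) - b $ i" unfolding w_def by auto
    define sw where "sw = (\<Sum>k<n. (cmod (w $ k))\<^sup>2)"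
    have sw_c: "(\<Sum>k<n. cnj (w $ k) * w $ k) = complex_of_real sw"
      unfolding sw_def by (simp add: cnj_mult_self del: of_real_power)
    have "(\<Sum>k<n. cnj (w $ k) * w $ k) = (\<Sum>k<n. (if k = m then 1 else 0) * (if k = m then 1 else 0))
        - (\<Sum>k<n. (if k = m then 1 else 0) * b $ k) - (\<Sum>k<n. (if k = m then 1 else 0) * cnj (b $ k))
        + (\<Sum>k<n. cnj (b $ k) * b $ k)"
    proof -
      have "\<And>k. k < n \<Longrightarrow> cnj (w $ k) * w $ k = (if k = m then 1 else 0) * (if k = m then 1 else 0)
        - (if k = m then 1 else 0) * b $ k - (if k = m then 1 else 0) * cnj (b $ k) + cnj (b $ k) * b $ k"
        by (case_tac "k = m") (simp_all add: wi algebra_simps)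
      then have "(\<Sum>k<n. cnj (w $ k) * w $ k) = (\<Sum>k<n. (if k = m then 1 else 0) * (if k = m then 1 else 0)
        - (if k = m then 1 else 0) * b $ k - (if k = m then 1 else 0) * cnj (b $ k) + cnj (b $ k) * b $ k)"
        by (intro sum.cong) auto
      then show ?thesis by (simp only: sum.distrib sum_subtractf)
    qed
    also have "\<dots> = 2 - 2 * complex_of_real t"
      using m by (simp only: sum_delta_left bnorm bm) simp
    finally have "complex_of_real sw = complex_of_real (2 - 2 * t)" using sw_c by simp
    then have sw2: "sw = 2 - 2 * t" by (simp only: of_real_eq_iff)
    have swpos: "sw > 0"
    proof (rule ccontr)
      assume "\<not> sw > 0"
      moreover have "sw \<ge> 0" unfolding sw_def by (auto intro: sum_nonneg)
      ultimately have "sw = 0" by auto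
      then have "\<forall>k\<in>{..<n}. (cmod (w $ k))\<^sup>2 = 0" unfolding sw_def
        by (subst sum_nonneg_eq_0_iff[symmetric]) auto
      then have "\<And>k. k < n \<Longrightarrow> b $ k = (if k = m then 1 else 0)" using wi by auto
      then have "b = unit_vec n m" using bc m by (intro eq_vecI) auto
      then show False using False by auto
    qed
    define \<beta> where "\<beta> = 2 / sw"
    have beta: "\<beta> * \<beta> * sw = 2 * \<beta>" unfolding \<beta>_def using swpos by (simp add: field_simps)
    have beta1: "complex_of_real \<beta> * (1 - complex_of_real t) = 1"
    proof -
      have "\<beta> * (1 - t) = 1" unfolding \<beta>_def sw2 using swpos sw2 by (simp add: field_simps)
      then show ?thesis by (metis of_real_1 of_real_diff of_real_mult)
    qed
    define H where "H = Matrix.mat n n (\<lambda>(i,j). (if i = j then 1 else 0) - complex_of_real \<beta> * w $ i * cnj (w $ j))"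
    have HU: "unitary n H" unfolding H_def using householder_unitary[OF wc sw_c beta] .
    have Hcol: "\<forall>j<m. col H j = unit_vec n j"
    proof (intro allI impI)
      fix j assume j: "j < m"
      have "w $ j = 0" using wi[of j] j m bzero[OF j] by auto
      then show "col H j = unit_vec n j" using j m unfolding H_def by (intro eq_vecI) auto
    qed
    have wm: "cnj (w $ m) = 1 - complex_of_real t" using wi[OF m] bm by simp
    have "col H m = b"
    proof (rule eq_vecI)
      fix i assume "i < dim_vec b"
      then have i: "i < n" using bc by auto
      have "col H m $ i = (if i = m then 1 else 0) - complex_of_real \<beta> * w $ i * cnj (w $ m)"
        unfolding H_def using i m by auto
      also have "\<dots> = (if i = m then 1 else 0) - w $ i" using beta1 wm
        by (simp add: mult.assoc mult.left_commute[of _ "w $ i"])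
      also have "\<dots> = b $ i" using wi[OF i] by simp
      finally show "col H m $ i = b $ i" .
    qed (use bc H_def in auto)
    then show ?thesis using HU Hcol c0 unfolding b_def by blast
  qed
qed

lemma sum_shift_zero:
  fixes m n :: nat and g z :: "nat \<Rightarrow> complex"
  assumes "m \<le> n" "\<forall>k<m. z k = 0"
  shows "(\<Sum>k<n. g k * z k) = (\<Sum>k<n-m. g (m+k) * z (m+k))"
proof -
  have "{..<n} = {..<m} \<union> {m..<n}" using assms by auto
  then have "(\<Sum>k<n. g k * z k) = (\<Sum>k\<in>{..<m} \<union> {m..<n}. g k * z k)" by simp
  also have "\<dots> = (\<Sum>k<m. g k * z k) + (\<Sum>k\<in>{m..<n}. g k * z k)"
    by (rule sum.union_disjoint) auto
  also have "(\<Sum>k<m. g k * z k) = 0" using assms by auto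
  also have "(\<Sum>k\<in>{m..<n}. g k * z k) = (\<Sum>k<n-m. g (m+k) * z (m+k))"
    by (rule sum.reindex_bij_witness[of _ "\<lambda>k. m + k" "\<lambda>k. k - m"]) auto
  finally show ?thesis by simp
qed

lemma mult_unit_vec_col:
  fixes W :: "complex mat"
  assumes "W \<in> carrier_mat n n" "j < n"
  shows "W *\<^sub>v unit_vec n j = col W j"
proof -
  have "col (W * 1\<^sub>m n) j = W *\<^sub>v col (1\<^sub>m n) j" using assms by (intro col_mult2) auto
  then show ?thesis using assms right_mult_one_mat[of W n n] by simp
qed

lemma spectral_step:
  assumes X: "hermitian n X" and W: "unitary n W" and m: "m < n"
    and ev: "\<forall>j<m. \<exists>\<mu>. X *\<^sub>v col W j = \<mu> \<cdot>\<^sub>v col W j"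
  shows "\<exists>W'. unitary n W' \<and> (\<forall>j<Suc m. \<exists>\<mu>. X *\<^sub>v col W' j = \<mu> \<cdot>\<^sub>v col W' j)"
proof -
  have Xc: "X \<in> carrier_mat n n" using X by (auto simp: hermitian_def)
  have Wc: "W \<in> carrier_mat n n" using W by (auto simp: unitary_def)
  from ev obtain mu where mu: "\<And>j. j < m \<Longrightarrow> X *\<^sub>v col W j = mu j \<cdot>\<^sub>v col W j" by metis
  define Z where "Z = cadj W * X * W"
  have Zc: "Z \<in> carrier_mat n n" unfolding Z_def using Wc Xc by auto
  have Zh: "hermitian n Z" unfolding Z_def using hermitian_compress[OF X Wc] .
  have Zcol: "\<And>i j. i < n \<Longrightarrow> j < m \<Longrightarrow> Z $$ (i,j) = (if i = j then mu j else 0)"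
    unfolding Z_def using compress_eigen[OF W Xc _ _ mu] m by auto
  have Zrow: "\<And>i j. i < n \<Longrightarrow> j < m \<Longrightarrow> i \<noteq> j \<Longrightarrow> Z $$ (j,i) = 0"
  proof -
    fix i j assume i: "i < n" and j: "j < m" and ij: "i \<noteq> j"
    have "Z $$ (j,i) = cnj (Z $$ (i,j))" using hermitian_index[OF Zh i, of j] j m by simp
    also have "\<dots> = 0" using Zcol[OF i j] ij by simp
    finally show "Z $$ (j,i) = 0" .
  qed
  define Z3 where "Z3 = Matrix.mat (n-m) (n-m) (\<lambda>(i,j). Z $$ (m+i, m+j))"
  have Z3c: "Z3 \<in> carrier_mat (n-m) (n-m)" unfolding Z3_def by auto
  from spectrum_non_empty[OF Z3c] m obtain \<mu> where "eigenvalue Z3 \<mu>"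
    unfolding spectrum_def by auto
  then obtain y where y: "y \<in> carrier_vec (n-m)" "y \<noteq> 0\<^sub>v (n-m)" "Z3 *\<^sub>v y = \<mu> \<cdot>\<^sub>v y"
    unfolding eigenvalue_def eigenvector_def using Z3c by auto
  define z where "z = vec n (\<lambda>i. if i < m then 0 else y $ (i - m))"
  have zc: "z \<in> carrier_vec n" unfolding z_def by auto
  have zm: "\<forall>i<m. z $ i = 0" unfolding z_def using m by auto
  have z0: "z \<noteq> 0\<^sub>v n"
  proof
    assume "z = 0\<^sub>v n"
    have "\<And>i. i < n - m \<Longrightarrow> z $ (m+i) = y $ i" unfolding z_def by simp
    moreover have "\<And>i. i < n - m \<Longrightarrow> z $ (m+i) = 0" using \<open>z = 0\<^sub>v n\<close> by simp
    ultimately have "\<And>i. i < n - m \<Longrightarrow> y $ i = 0" by metis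
    then have "y = 0\<^sub>v (n-m)" using y(1) by (intro eq_vecI) auto
    then show False using y(2) by auto
  qed
  have Zz: "Z *\<^sub>v z = \<mu> \<cdot>\<^sub>v z"
  proof (rule eq_vecI)
    fix i assume "i < dim_vec (\<mu> \<cdot>\<^sub>v z)"
    then have i: "i < n" using zc by auto
    have "(Z *\<^sub>v z) $ i = (\<Sum>k<n. Z $$ (i,k) * z $ k)"
      using Zc zc i by (auto simp: scalar_prod_def atLeast0LessThan)
    also have "\<dots> = (\<Sum>k<n-m. Z $$ (i,m+k) * z $ (m+k))"
      using sum_shift_zero[of m n "\<lambda>k. z $ k" "\<lambda>k. Z $$ (i,k)"] m zm by auto
    also have "\<dots> = (\<Sum>k<n-m. Z $$ (i,m+k) * y $ k)"
      unfolding z_def by (intro sum.cong) auto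
    also have "\<dots> = \<mu> * z $ i"
    proof (cases "i < m")
      case True
      then have "\<And>k. k < n - m \<Longrightarrow> Z $$ (i,m+k) = 0" using Zrow[of "m+_" i] by auto
      then show ?thesis using True zm by auto
    next
      case False
      then have "(\<Sum>k<n-m. Z $$ (i,m+k) * y $ k) = (Z3 *\<^sub>v y) $ (i - m)"
        using i y(1) Z3c unfolding Z3_def by (auto simp: scalar_prod_def atLeast0LessThan intro!: sum.cong)
      also have "\<dots> = \<mu> * y $ (i - m)" using y(3) y(1) i False by auto
      finally show ?thesis using False i unfolding z_def by auto
    qed
    finally show "(Z *\<^sub>v z) $ i = (\<mu> \<cdot>\<^sub>v z) $ i" using i zc by auto
  qed (use Zc zc in auto)
  obtain H c where H: "unitary n H" "\<forall>j<m. col H j = unit_vec n j" "c \<noteq> 0" "col H m = c \<cdot>\<^sub>v z"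
    using householder_exists[OF zc z0 m zm] by blast
  have Hc: "H \<in> carrier_mat n n" using H(1) by (auto simp: unitary_def)
  define W' where "W' = W * H"
  have W'c: "W' \<in> carrier_mat n n" unfolding W'_def using Wc Hc by auto
  have "cadj W' * W' = cadj H * cadj W * (W * H)"
    unfolding W'_def using Wc Hc by (subst cadj_mult[of _ n n]) auto
  also have "\<dots> = cadj H * ((cadj W * W) * H)"
  proof -
    have a: "cadj H \<in> carrier_mat n n" "cadj W \<in> carrier_mat n n" using Wc Hc by auto
    have "cadj H * cadj W * (W * H) = cadj H * (cadj W * (W * H))"
      using a Wc Hc by (intro assoc_mult_mat) auto
    also have "cadj W * (W * H) = (cadj W * W) * H" using a Wc Hc by (intro assoc_mult_mat[symmetric]) auto
    finally show ?thesis .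
  qed
  also have "\<dots> = 1\<^sub>m n" using W H(1) Hc by (auto simp: unitary_def)
  finally have W'U: "unitary n W'" using W'c unfolding unitary_def by auto
  have colW': "\<And>j. j < n \<Longrightarrow> col W' j = W *\<^sub>v col H j"
    unfolding W'_def using Wc Hc by auto
  have WZ: "W * Z = X * W"
  proof -
    have a: "cadj W \<in> carrier_mat n n" using Wc by auto
    have "W * Z = W * ((cadj W * X) * W)" unfolding Z_def ..
    also have "\<dots> = (W * (cadj W * X)) * W" using a Wc Xc by (intro assoc_mult_mat[symmetric]) auto
    also have "W * (cadj W * X) = (W * cadj W) * X" using a Wc Xc by (intro assoc_mult_mat[symmetric]) auto
    finally have "W * Z = (W * cadj W) * X * W" .
    also have "\<dots> = X * W" using unitary_right[OF W] Xc by simp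
    finally show ?thesis .
  qed
  have "X *\<^sub>v (W *\<^sub>v z) = \<mu> \<cdot>\<^sub>v (W *\<^sub>v z)"
  proof -
    have "X *\<^sub>v (W *\<^sub>v z) = (X * W) *\<^sub>v z" using Xc Wc zc by auto
    also have "\<dots> = (W * Z) *\<^sub>v z" using WZ by simp
    also have "\<dots> = W *\<^sub>v (Z *\<^sub>v z)" using Wc Zc zc by auto
    also have "\<dots> = \<mu> \<cdot>\<^sub>v (W *\<^sub>v z)" using Zz Wc zc by (simp add: mult_mat_vec)
    finally show ?thesis .
  qed
  then have evm: "X *\<^sub>v col W' m = \<mu> \<cdot>\<^sub>v col W' m"
    unfolding colW'[OF m] H(4) using Xc Wc zc
    by (simp add: mult_mat_vec smult_smult_assoc mult.commute)
  have "\<forall>j<Suc m. \<exists>\<mu>. X *\<^sub>v col W' j = \<mu> \<cdot>\<^sub>v col W' j"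
  proof (intro allI impI)
    fix j assume "j < Suc m"
    then consider "j < m" | "j = m" by linarith
    then show "\<exists>\<mu>. X *\<^sub>v col W' j = \<mu> \<cdot>\<^sub>v col W' j"
    proof cases
      case 1
      then have "col W' j = col W j" using colW'[of j] H(2) m mult_unit_vec_col[OF Wc] by auto
      then show ?thesis using ev 1 by auto
    qed (use evm in auto)
  qed
  then show ?thesis using W'U by blast
qed

lemma unitary_one: "unitary n (1\<^sub>m n)"
  unfolding unitary_def by (auto intro!: eq_matI simp: cadj_def)

lemma spectral_all:
  assumes X: "hermitian n X"
  shows "m \<le> n \<Longrightarrow> \<exists>W. unitary n W \<and> (\<forall>j<m. \<exists>\<mu>. X *\<^sub>v col W j = \<mu> \<cdot>\<^sub>v col W j)"
proof (induction m)
  case 0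
  then show ?case using unitary_one by blast
next
  case (Suc m)
  then obtain W where "unitary n W" "\<forall>j<m. \<exists>\<mu>. X *\<^sub>v col W j = \<mu> \<cdot>\<^sub>v col W j" by auto
  then show ?case using spectral_step[OF X] Suc.prems by auto
qed

lemma spectral_exists:
  assumes X: "hermitian n X"
  shows "\<exists>U d. spectral_decomp n X U d"
proof -
  have Xc: "X \<in> carrier_mat n n" using X by (auto simp: hermitian_def)
  obtain W where W: "unitary n W" and ev: "\<forall>j<n. \<exists>\<mu>. X *\<^sub>v col W j = \<mu> \<cdot>\<^sub>v col W j"
    using spectral_all[OF X, of n] by auto
  have Wc: "W \<in> carrier_mat n n" using W by (auto simp: unitary_def)
  from ev obtain mu where mu: "\<And>j. j < n \<Longrightarrow> X *\<^sub>v col W j = mu j \<cdot>\<^sub>v col W j" by metis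
  define Z where "Z = cadj W * X * W"
  have Zh: "hermitian n Z" unfolding Z_def using hermitian_compress[OF X Wc] .
  have Zi: "\<And>i j. i < n \<Longrightarrow> j < n \<Longrightarrow> Z $$ (i,j) = (if i = j then mu j else 0)"
    unfolding Z_def using compress_eigen[OF W Xc _ _ mu] by auto
  define d where "d = (\<lambda>j. Re (mu j))"
  have real: "\<And>j. j < n \<Longrightarrow> mu j = complex_of_real (d j)"
  proof -
    fix j assume j: "j < n"
    have "Z $$ (j,j) = cnj (Z $$ (j,j))" using hermitian_index[OF Zh j j] .
    then have "mu j = cnj (mu j)" using Zi[OF j j] by simp
    then have "Im (mu j) = Im (cnj (mu j))" by (rule arg_cong)
    then have "Im (mu j) = 0" by simp
    then show "mu j = complex_of_real (d j)" unfolding d_def by (simp add: complex_eq_iff)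
  qed
  have Zc: "Z \<in> carrier_mat n n" using Zh by (auto simp: hermitian_def)
  have Zd: "Z = mat_diag n (\<lambda>i. complex_of_real (d i))"
  proof (rule eq_matI)
    fix i j assume "i < dim_row (mat_diag n (\<lambda>i. complex_of_real (d i)))"
      "j < dim_col (mat_diag n (\<lambda>i. complex_of_real (d i)))"
    then have i: "i < n" and j: "j < n" by (auto simp: mat_diag_def)
    show "Z $$ (i,j) = mat_diag n (\<lambda>i. complex_of_real (d i)) $$ (i,j)"
      unfolding Zi[OF i j] using real[OF j] i j by (simp add: mat_diag_def)
  qed (use Zc in \<open>auto simp: mat_diag_def\<close>)
  have a: "cadj W \<in> carrier_mat n n" using Wc by auto
  have "W * Z * cadj W = (W * cadj W) * X * (W * cadj W)"
  proof -
    have e1: "cadj W * X * W = cadj W * (X * W)" using a Wc Xc by (intro assoc_mult_mat) auto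
    have e2: "W * (cadj W * (X * W)) = (W * cadj W) * (X * W)" using a Wc Xc by (intro assoc_mult_mat[symmetric]) auto
    have e3: "(W * cadj W) * (X * W) = ((W * cadj W) * X) * W" using a Wc Xc by (intro assoc_mult_mat[symmetric]) auto
    have e4: "((W * cadj W) * X) * W * cadj W = ((W * cadj W) * X) * (W * cadj W)" using a Wc Xc by (intro assoc_mult_mat) auto
    show ?thesis unfolding Z_def e1 e2 e3 e4 ..
  qed
  also have "\<dots> = X" using unitary_right[OF W] Xc by simp
  finally have "X = W * mat_diag n (\<lambda>i. complex_of_real (d i)) * cadj W" using Zd by simp
  then show ?thesis using W unfolding spectral_decomp_def by blast
qed


section \<open>Integral representation\<close>


lemma K_finite:
  fixes \<alpha> :: real assumes a1: "-1 < \<alpha>" and a0: "\<alpha> < 0"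
  shows "(\<integral>\<^sup>+ u. ennreal (indicator {0<..} u * (u powr \<alpha> / (u + 1))) \<partial>lborel) < \<infinity>"
proof -
  have i1: "(\<integral>\<^sup>+ u. ennreal (indicator {0..1} u * u powr \<alpha>) \<partial>lborel) = ennreal (1 / (\<alpha> + 1))"
    using nn_integral_has_integral_lebesgue[OF _ has_integral_powr_from_0[OF a1, of 1]] by simp
  have i2: "(\<integral>\<^sup>+ u. ennreal (indicator {1..} u * u powr (\<alpha> - 1)) \<partial>lborel) = ennreal (- 1 / \<alpha>)"
    using nn_integral_has_integral_lebesgue[OF _ has_integral_powr_to_inf[of "\<alpha> - 1" 1]] a0 by simp
  have "(\<integral>\<^sup>+ u. ennreal (indicator {0<..} u * (u powr \<alpha> / (u + 1))) \<partial>lborel)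
      \<le> (\<integral>\<^sup>+ u. ennreal (indicator {0..1} u * u powr \<alpha>) + ennreal (indicator {1..} u * u powr (\<alpha> - 1)) \<partial>lborel)"
  proof (rule nn_integral_mono)
    fix u :: real
    show "ennreal (indicator {0<..} u * (u powr \<alpha> / (u + 1)))
      \<le> ennreal (indicator {0..1} u * u powr \<alpha>) + ennreal (indicator {1..} u * u powr (\<alpha> - 1))"
    proof (cases "u > 0")
      case False then show ?thesis by (simp add: indicator_def)
    next
      case True
      show ?thesis
      proof (cases "u \<le> 1")
        case True
        have "u powr \<alpha> / (u + 1) \<le> u powr \<alpha>" using \<open>u > 0\<close>
          by (simp add: divide_le_eq_1 field_simps)
        then have "ennreal (indicator {0<..} u * (u powr \<alpha> / (u + 1))) \<le> ennreal (indicator {0..1} u * u powr \<alpha>)"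
          using True \<open>u > 0\<close> by (auto simp: indicator_def intro!: ennreal_leI)
        then show ?thesis by (meson add_increasing2 order_trans zero_le)
      next
        case False
        have "u powr \<alpha> / (u + 1) \<le> u powr \<alpha> / u" using \<open>u > 0\<close>
          by (intro divide_left_mono) auto
        also have "\<dots> = u powr (\<alpha> - 1)" using \<open>u > 0\<close> by (simp add: powr_diff)
        finally have "ennreal (indicator {0<..} u * (u powr \<alpha> / (u + 1))) \<le> ennreal (indicator {1..} u * u powr (\<alpha> - 1))"
          using False \<open>u > 0\<close> by (auto simp: indicator_def intro!: ennreal_leI)
        then show ?thesis by (meson add_increasing order_trans zero_le)
      qed
    qed
  qed
  also have "\<dots> = (\<integral>\<^sup>+ u. ennreal (indicator {0..1} u * u powr \<alpha>) \<partial>lborel) + (\<integral>\<^sup>+ u. ennreal (indicator {1..} u * u powr (\<alpha> - 1)) \<partial>lborel)"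
    by (rule nn_integral_add) auto
  also have "\<dots> < \<infinity>" unfolding i1 i2 by simp
  finally show ?thesis .
qed

lemma K_pos:
  fixes \<alpha> :: real assumes a0: "\<alpha> < 0"
  shows "0 < (\<integral>\<^sup>+ u. ennreal (indicator {0<..} u * (u powr \<alpha> / (u + 1))) \<partial>lborel)"
proof -
  have "(\<integral>\<^sup>+ u. ennreal (1/2) * indicator {0<..1::real} u \<partial>lborel) \<le> (\<integral>\<^sup>+ u. ennreal (indicator {0<..} u * (u powr \<alpha> / (u + 1))) \<partial>lborel)"
  proof (rule nn_integral_mono)
    fix u :: real
    show "ennreal (1/2) * indicator {0<..1} u \<le> ennreal (indicator {0<..} u * (u powr \<alpha> / (u + 1)))"
    proof (cases "0 < u \<and> u \<le> 1")
      case True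
      then have "u powr 0 \<le> u powr \<alpha>" using a0
        by (intro powr_mono') auto
      then have "1 \<le> u powr \<alpha>" using True by simp
      then have "1/2 \<le> u powr \<alpha> / (u + 1)" using True by (simp add: field_simps)
      then have "ennreal (1/2) \<le> ennreal (u powr \<alpha> / (u + 1))" by (rule ennreal_leI)
      then show ?thesis using True by (simp add: indicator_def)
    qed (auto simp: indicator_def)
  qed
  moreover have "(\<integral>\<^sup>+ u. ennreal (1/2) * indicator {0<..1::real} u \<partial>lborel) = ennreal (1/2)"
    by (simp add: nn_integral_cmult_indicator)
  moreover have "(0::ennreal) < ennreal (1/2)" by (subst ennreal_less_zero_iff) simp
  ultimately show ?thesis by (metis less_le_trans)
qed

lemma F_scale:
  fixes \<alpha> x :: real assumes x: "x > 0"
  shows "(\<integral>\<^sup>+ s. ennreal (indicator {0<..} s * (s powr \<alpha> / (s + x))) \<partial>lborel)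
    = ennreal (x powr \<alpha>) * (\<integral>\<^sup>+ u. ennreal (indicator {0<..} u * (u powr \<alpha> / (u + 1))) \<partial>lborel)"
proof -
  have "(\<integral>\<^sup>+ s. ennreal (indicator {0<..} s * (s powr \<alpha> / (s + x))) \<partial>lborel)
    = ennreal \<bar>x\<bar> * (\<integral>\<^sup>+ u. ennreal (indicator {0<..} (0 + x * u) * ((0 + x * u) powr \<alpha> / ((0 + x * u) + x))) \<partial>lborel)"
    using x by (intro nn_integral_real_affine) auto
  also have "\<dots> = ennreal x * (\<integral>\<^sup>+ u. ennreal (x powr \<alpha> / x) * ennreal (indicator {0<..} u * (u powr \<alpha> / (u + 1))) \<partial>lborel)"
  proof -
    have "\<And>u. ennreal (indicator {0<..} (0 + x * u) * ((0 + x * u) powr \<alpha> / ((0 + x * u) + x)))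
      = ennreal (x powr \<alpha> / x) * ennreal (indicator {0<..} u * (u powr \<alpha> / (u + 1)))"
    proof -
      fix u :: real
      show "ennreal (indicator {0<..} (0 + x * u) * ((0 + x * u) powr \<alpha> / ((0 + x * u) + x)))
        = ennreal (x powr \<alpha> / x) * ennreal (indicator {0<..} u * (u powr \<alpha> / (u + 1)))"
      proof (cases "u > 0")
        case True
        have "(x * u) powr \<alpha> / (x * u + x) = (x powr \<alpha> / x) * (u powr \<alpha> / (u + 1))"
          using True x by (simp add: powr_mult field_simps)
        then show ?thesis using True x by (simp add: indicator_def ennreal_mult[symmetric] zero_less_mult_iff)
      next
        case False
        then have "\<not> 0 < x * u" using x by (simp add: zero_less_mult_iff)
        then show ?thesis using False by (simp add: indicator_def)
      qed
    qed
    then show ?thesis using x by simp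
  qed
  also have "\<dots> = ennreal x * (ennreal (x powr \<alpha> / x) * (\<integral>\<^sup>+ u. ennreal (indicator {0<..} u * (u powr \<alpha> / (u + 1))) \<partial>lborel))"
    by (subst nn_integral_cmult) auto
  also have "\<dots> = ennreal (x powr \<alpha>) * (\<integral>\<^sup>+ u. ennreal (indicator {0<..} u * (u powr \<alpha> / (u + 1))) \<partial>lborel)"
    using x by (simp add: mult.assoc[symmetric] ennreal_mult[symmetric])
  finally show ?thesis .
qed

lemma F_meas: "(\<lambda>s. ennreal (indicator {0<..} s * (s powr \<alpha> / (s + x)))) \<in> borel_measurable lborel"
  by measurable

lemma sum_int:
  fixes \<alpha> :: real and I :: "'i set"
  assumes I: "finite I" and ux: "\<forall>i\<in>I. 0 \<le> u i \<and> 0 < x i"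
  shows "ennreal (\<Sum>i\<in>I. u i * x i powr \<alpha>) * (\<integral>\<^sup>+ u. ennreal (indicator {0<..} u * (u powr \<alpha> / (u + 1))) \<partial>lborel)
    = (\<integral>\<^sup>+ s. ennreal (indicator {0<..} s * s powr \<alpha> * (\<Sum>i\<in>I. u i / (s + x i))) \<partial>lborel)"
proof -
  let ?K = "(\<integral>\<^sup>+ u. ennreal (indicator {0<..} u * (u powr \<alpha> / (u + 1))) \<partial>lborel)"
  have "ennreal (\<Sum>i\<in>I. u i * x i powr \<alpha>) * ?K = (\<Sum>i\<in>I. ennreal (u i * x i powr \<alpha>)) * ?K"
    using ux by (subst sum_ennreal) auto
  also have "\<dots> = (\<Sum>i\<in>I. ennreal (u i) * (ennreal (x i powr \<alpha>) * ?K))"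
    using ux by (auto simp: sum_distrib_right ennreal_mult mult.assoc intro!: sum.cong)
  also have "\<dots> = (\<Sum>i\<in>I. ennreal (u i) * (\<integral>\<^sup>+ s. ennreal (indicator {0<..} s * (s powr \<alpha> / (s + x i))) \<partial>lborel))"
  proof (intro sum.cong refl)
    fix i assume "i \<in> I"
    then have "x i > 0" using ux by auto
    show "ennreal (u i) * (ennreal (x i powr \<alpha>) * ?K) = ennreal (u i) * (\<integral>\<^sup>+ s. ennreal (indicator {0<..} s * (s powr \<alpha> / (s + x i))) \<partial>lborel)"
      by (simp only: F_scale[OF \<open>x i > 0\<close>])
  qed
  also have "\<dots> = (\<Sum>i\<in>I. (\<integral>\<^sup>+ s. ennreal (u i) * ennreal (indicator {0<..} s * (s powr \<alpha> / (s + x i))) \<partial>lborel))"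
    by (intro sum.cong refl nn_integral_cmult[symmetric]) (rule F_meas)
  also have "\<dots> = (\<integral>\<^sup>+ s. (\<Sum>i\<in>I. ennreal (u i) * ennreal (indicator {0<..} s * (s powr \<alpha> / (s + x i)))) \<partial>lborel)"
    by (rule nn_integral_sum[symmetric]) (use F_meas in auto)
  also have "\<dots> = (\<integral>\<^sup>+ s. ennreal (indicator {0<..} s * s powr \<alpha> * (\<Sum>i\<in>I. u i / (s + x i))) \<partial>lborel)"
  proof (rule nn_integral_cong)
    fix s :: real
    have "(\<Sum>i\<in>I. ennreal (u i) * ennreal (indicator {0<..} s * (s powr \<alpha> / (s + x i))))
        = (\<Sum>i\<in>I. ennreal (u i * (indicator {0<..} s * (s powr \<alpha> / (s + x i)))))"
    proof (intro sum.cong refl)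
      fix i assume "i \<in> I"
      then have "0 \<le> u i" "0 < x i" using ux by auto
      moreover have "0 \<le> indicator {0<..} s * (s powr \<alpha> / (s + x i))"
        using \<open>0 < x i\<close> by (auto simp: indicator_def)
      ultimately show "ennreal (u i) * ennreal (indicator {0<..} s * (s powr \<alpha> / (s + x i)))
        = ennreal (u i * (indicator {0<..} s * (s powr \<alpha> / (s + x i))))"
        by (intro ennreal_mult[symmetric])
    qed
    also have "\<dots> = ennreal (\<Sum>i\<in>I. u i * (indicator {0<..} s * (s powr \<alpha> / (s + x i))))"
      using ux by (intro sum_ennreal) (auto simp: indicator_def)
    also have "(\<Sum>i\<in>I. u i * (indicator {0<..} s * (s powr \<alpha> / (s + x i)))) =
        indicator {0<..} s * s powr \<alpha> * (\<Sum>i\<in>I. u i / (s + x i))"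
      by (simp add: sum_distrib_left algebra_simps)
    finally show "(\<Sum>i\<in>I. ennreal (u i) * ennreal (indicator {0<..} s * (s powr \<alpha> / (s + x i)))) =
        ennreal (indicator {0<..} s * s powr \<alpha> * (\<Sum>i\<in>I. u i / (s + x i)))" .
  qed
  finally show ?thesis .
qed

lemma integral_compare:
  fixes \<alpha> :: real and I :: "'i set" and J :: "'j set"
  assumes a1: "-1 < \<alpha>" and a0: "\<alpha> < 0" and I: "finite I" and J: "finite J"
    and ux: "\<forall>i\<in>I. 0 \<le> u i \<and> 0 < x i" and vy: "\<forall>j\<in>J. 0 \<le> v j \<and> 0 < y j"
    and le: "\<And>s. s > 0 \<Longrightarrow> (\<Sum>i\<in>I. u i / (s + x i)) \<le> (\<Sum>j\<in>J. v j / (s + y j))"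
  shows "(\<Sum>i\<in>I. u i * x i powr \<alpha>) \<le> (\<Sum>j\<in>J. v j * y j powr \<alpha>)"
proof -
  let ?K = "(\<integral>\<^sup>+ u. ennreal (indicator {0<..} u * (u powr \<alpha> / (u + 1))) \<partial>lborel)"
  have "ennreal (\<Sum>i\<in>I. u i * x i powr \<alpha>) * ?K \<le> ennreal (\<Sum>j\<in>J. v j * y j powr \<alpha>) * ?K"
    unfolding sum_int[OF I ux] sum_int[OF J vy]
  proof (rule nn_integral_mono)
    fix s :: real
    show "ennreal (indicator {0<..} s * s powr \<alpha> * (\<Sum>i\<in>I. u i / (s + x i)))
      \<le> ennreal (indicator {0<..} s * s powr \<alpha> * (\<Sum>j\<in>J. v j / (s + y j)))"
    proof (cases "s > 0")
      case True
      then show ?thesis using le[OF True] by (intro ennreal_leI) (auto simp: indicator_def intro: mult_left_mono)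
    qed (simp add: indicator_def)
  qed
  moreover obtain k where k: "?K = ennreal k" "k > 0"
  proof -
    have f: "?K < \<infinity>" using K_finite[OF a1 a0] .
    have p: "0 < ?K" using K_pos[OF a0] .
    from f obtain k where "?K = ennreal k" "0 \<le> k" using less_top_ennreal[of ?K] by auto
    moreover have "k > 0" using p \<open>?K = ennreal k\<close> by simp
    ultimately show ?thesis using that by blast
  qed
  moreover have "0 \<le> (\<Sum>i\<in>I. u i * x i powr \<alpha>)" "0 \<le> (\<Sum>j\<in>J. v j * y j powr \<alpha>)"
    using ux vy by (auto intro!: sum_nonneg)
  ultimately have "(\<Sum>i\<in>I. u i * x i powr \<alpha>) * k \<le> (\<Sum>j\<in>J. v j * y j powr \<alpha>) * k"
    by (simp add: ennreal_mult[symmetric])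
  then show ?thesis using k(2) by simp
qed


section \<open>Quadratic forms in eigen-coordinates\<close>

lemma unitary_carrier: "unitary n U \<Longrightarrow> U \<in> carrier_mat n n"
  by (simp add: unitary_def)

lemma qf_decomp:
  assumes "spectral_decomp n X U d" "v \<in> carrier_vec n"
  shows "Re (qform X v) = (\<Sum>j<n. d j * (cmod (coef n U v j))\<^sup>2)"
proof -
  have U: "U \<in> carrier_mat n n" and X: "X = U * mat_diag n (\<lambda>i. complex_of_real (d i)) * cadj U"
    using assms by (auto simp: spectral_decomp_def unitary_def)
  show ?thesis unfolding X qform_UDU[OF U assms(2)] by (simp add: Re_sum)
qed

lemma coef_mult:
  assumes U: "unitary n U" and y: "y \<in> carrier_vec n" and j: "j < n"
  shows "coef n U (U *\<^sub>v y) j = y $ j"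
proof -
  have Uc: "U \<in> carrier_mat n n" using U by (simp add: unitary_def)
  have "coef n U (U *\<^sub>v y) j = (\<Sum>l<n. cnj (U $$ (l,j)) * (\<Sum>m<n. U $$ (l,m) * y $ m))"
    unfolding coef_def using Uc y by (auto simp: scalar_prod_def atLeast0LessThan intro!: sum.cong)
  also have "\<dots> = (\<Sum>m<n. (\<Sum>l<n. cnj (U $$ (l,j)) * U $$ (l,m)) * y $ m)"
    by (simp add: sum_distrib_left sum_distrib_right algebra_simps) (rule sum.swap)
  also have "\<dots> = (\<Sum>m<n. (if j = m then 1 else 0) * y $ m)"
    using j by (intro sum.cong refl) (simp add: unitary_col_sum[OF U])
  also have "\<dots> = (\<Sum>m<n. (if m = j then 1 else 0) * y $ m)" by (intro sum.cong) auto
  also have "\<dots> = y $ j" using sum_delta_left[OF j, of "\<lambda>m. y $ m"] .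
  finally show ?thesis .
qed

lemma per_term:
  assumes e: "e > 0"
  shows "2 * Re (\<xi> * cnj \<gamma>) - e * (cmod \<xi>)\<^sup>2 \<le> (cmod \<gamma>)\<^sup>2 / e"
proof -
  have "0 \<le> (e * Re \<xi> - Re \<gamma>)\<^sup>2 + (e * Im \<xi> - Im \<gamma>)\<^sup>2" by simp
  then have "e * (2 * (Re \<xi> * Re \<gamma> + Im \<xi> * Im \<gamma>) - e * ((Re \<xi>)\<^sup>2 + (Im \<xi>)\<^sup>2)) \<le> (Re \<gamma>)\<^sup>2 + (Im \<gamma>)\<^sup>2"
    by (simp add: power2_eq_square algebra_simps)
  then show ?thesis using e by (simp add: cmod_power2 field_simps)
qed

lemma var_expand:
  assumes D: "spectral_decomp n A U a" and v: "v \<in> carrier_vec n" and x: "x \<in> carrier_vec n"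
  shows "2 * Re (\<Sum>i<n. x $ i * cnj (v $ i)) - s * (\<Sum>i<n. (cmod (x $ i))\<^sup>2) - Re (qform A x)
    = (\<Sum>j<n. 2 * Re (coef n U x j * cnj (coef n U v j)) - (s + a j) * (cmod (coef n U x j))\<^sup>2)"
proof -
  have U: "unitary n U" using D by (simp add: spectral_decomp_def)
  show ?thesis
    unfolding coef_inner[OF U, symmetric] coef_norm[OF U, symmetric] qf_decomp[OF D x]
    by (simp add: Re_sum sum_distrib_left sum_subtractf algebra_simps)
qed

lemma var_bound:
  assumes D: "spectral_decomp n A U a" and pos: "\<forall>j<n. s + a j > 0"
    and v: "v \<in> carrier_vec n" and x: "x \<in> carrier_vec n"
  shows "2 * Re (\<Sum>i<n. x $ i * cnj (v $ i)) - s * (\<Sum>i<n. (cmod (x $ i))\<^sup>2) - Re (qform A x)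
    \<le> (\<Sum>j<n. (cmod (coef n U v j))\<^sup>2 / (s + a j))"
  unfolding var_expand[OF D v x] using pos by (intro sum_mono per_term) auto

lemma aux_e: "(e::real) \<noteq> 0 \<Longrightarrow> 2 * (G / e) - e * (G / e\<^sup>2) = G / e"
  by (simp add: power2_eq_square field_simps)

lemma var_attain:
  assumes D: "spectral_decomp n A U a" and pos: "\<forall>j<n. s + a j > 0" and v: "v \<in> carrier_vec n"
  shows "\<exists>x\<in>carrier_vec n. 2 * Re (\<Sum>i<n. x $ i * cnj (v $ i)) - s * (\<Sum>i<n. (cmod (x $ i))\<^sup>2) - Re (qform A x)
    = (\<Sum>j<n. (cmod (coef n U v j))\<^sup>2 / (s + a j))"
proof -
  have U: "unitary n U" using D by (simp add: spectral_decomp_def)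
  have Uc: "U \<in> carrier_mat n n" using U by (simp add: unitary_def)
  define y where "y = vec n (\<lambda>j. coef n U v j / complex_of_real (s + a j))"
  define x where "x = U *\<^sub>v y"
  have yc: "y \<in> carrier_vec n" unfolding y_def by simp
  have xc: "x \<in> carrier_vec n" unfolding x_def using Uc yc by simp
  have cx: "\<And>j. j < n \<Longrightarrow> coef n U x j = coef n U v j / complex_of_real (s + a j)"
    unfolding x_def using coef_mult[OF U yc] unfolding y_def by simp
  have "2 * Re (\<Sum>i<n. x $ i * cnj (v $ i)) - s * (\<Sum>i<n. (cmod (x $ i))\<^sup>2) - Re (qform A x)
    = (\<Sum>j<n. 2 * Re (coef n U x j * cnj (coef n U v j)) - (s + a j) * (cmod (coef n U x j))\<^sup>2)"
    using var_expand[OF D v xc] .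
  also have "\<dots> = (\<Sum>j<n. (cmod (coef n U v j))\<^sup>2 / (s + a j))"
  proof (intro sum.cong refl)
    fix j assume "j \<in> {..<n}"
    then have j: "j < n" and e: "s + a j > 0" using pos by auto
    let ?g = "coef n U v j" and ?e = "s + a j"
    have "coef n U x j * cnj ?g = (?g * cnj ?g) / complex_of_real ?e"
      unfolding cx[OF j] by (rule times_divide_eq_left)
    also have "?g * cnj ?g = complex_of_real ((cmod ?g)\<^sup>2)" by (rule complex_norm_square[symmetric])
    finally have h1: "Re (coef n U x j * cnj ?g) = (cmod ?g)\<^sup>2 / ?e"
      by (simp only: Re_divide_of_real Re_complex_of_real)
    have h2: "(cmod (coef n U x j))\<^sup>2 = (cmod ?g)\<^sup>2 / ?e\<^sup>2"
      unfolding cx[OF j] using e by (simp add: norm_divide power_divide del: of_real_add)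
    have h3: "\<And>G. 2 * (G / ?e) - ?e * (G / ?e\<^sup>2) = G / ?e"
      using e aux_e[of ?e] by simp
    show "2 * Re (coef n U x j * cnj ?g) - ?e * (cmod (coef n U x j))\<^sup>2 = (cmod ?g)\<^sup>2 / ?e"
      unfolding h1 h2 by (rule h3)
  qed
  finally show ?thesis using xc by blast
qed

lemma resolvent_mono:
  assumes DA: "spectral_decomp n A UA a" and DC: "spectral_decomp n C UC c"
    and pa: "\<forall>j<n. s + a j > 0" and pc: "\<forall>j<n. s + c j > 0"
    and le: "\<forall>x\<in>carrier_vec n. Re (qform A x) \<le> Re (qform C x)"
    and v: "v \<in> carrier_vec n"
  shows "(\<Sum>j<n. (cmod (coef n UC v j))\<^sup>2 / (s + c j)) \<le> (\<Sum>j<n. (cmod (coef n UA v j))\<^sup>2 / (s + a j))"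
proof -
  obtain x where x: "x \<in> carrier_vec n" and
    eq: "2 * Re (\<Sum>i<n. x $ i * cnj (v $ i)) - s * (\<Sum>i<n. (cmod (x $ i))\<^sup>2) - Re (qform C x)
    = (\<Sum>j<n. (cmod (coef n UC v j))\<^sup>2 / (s + c j))"
    using var_attain[OF DC pc v] by blast
  have "2 * Re (\<Sum>i<n. x $ i * cnj (v $ i)) - s * (\<Sum>i<n. (cmod (x $ i))\<^sup>2) - Re (qform C x)
     \<le> 2 * Re (\<Sum>i<n. x $ i * cnj (v $ i)) - s * (\<Sum>i<n. (cmod (x $ i))\<^sup>2) - Re (qform A x)"
    using le x by auto
  also have "\<dots> \<le> (\<Sum>j<n. (cmod (coef n UA v j))\<^sup>2 / (s + a j))"
    using var_bound[OF DA pa v x] .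
  finally show ?thesis using eq by simp
qed


section \<open>Matrix powers and positivity\<close>

lemma mat_powr_decomp:
  assumes X: "hermitian n X"
  shows "\<exists>U d. spectral_decomp n X U d \<and> mat_powr X p = U * mat_diag n (\<lambda>i. complex_of_real (d i powr p)) * cadj U"
proof -
  have dr: "dim_row X = n" using X by (auto simp: hermitian_def)
  let ?P = "\<lambda>(U, d). spectral_decomp n X U d"
  have ex: "\<exists>x. ?P x" using spectral_exists[OF X] by auto
  obtain U d where Ud: "(SOME x. ?P x) = (U, d)" by (cases "SOME x. ?P x") auto
  have "?P (U, d)" using someI_ex[OF ex] Ud by simp
  moreover have "mat_powr X p = U * mat_diag n (\<lambda>i. complex_of_real (d i powr p)) * cadj U"
    unfolding mat_powr_def Let_def dr Ud by simp
  ultimately show ?thesis by auto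
qed

lemma col_norm:
  assumes V: "unitary n V" and i: "i < n"
  shows "(\<Sum>k<n. (cmod (V $$ (k,i)))\<^sup>2) = 1"
proof -
  have "complex_of_real (\<Sum>k<n. (cmod (V $$ (k,i)))\<^sup>2) = (\<Sum>k<n. cnj (V $$ (k,i)) * V $$ (k,i))"
    by (simp add: cnj_mult_self del: of_real_power)
  also have "\<dots> = 1" using unitary_col_sum[OF V i i] by simp
  finally show ?thesis by (metis of_real_1 of_real_eq_iff)
qed

lemma coef_self_sq:
  assumes V: "unitary n V" and i: "i < n"
  shows "(\<Sum>j<n. f j * (cmod (coef n V (col V i) j))\<^sup>2) = f i"
proof -
  have "(\<Sum>j<n. f j * (cmod (coef n V (col V i) j))\<^sup>2) = (\<Sum>j<n. (if j = i then 1 else 0) * f j)"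
    using coef_col_self[OF V i] i by (intro sum.cong refl) auto
  also have "\<dots> = f i" using sum_delta_left[OF i] .
  finally show ?thesis .
qed

lemma decomp_pos:
  assumes P: "pos_def n X" and D: "spectral_decomp n X U d" and j: "j < n"
  shows "0 < d j"
proof -
  have U: "unitary n U" using D by (simp add: spectral_decomp_def)
  have Uc: "U \<in> carrier_mat n n" using U by (simp add: unitary_def)
  have vc: "col U j \<in> carrier_vec n" using Uc j by auto
  have "col U j \<noteq> 0\<^sub>v n"
  proof
    assume "col U j = 0\<^sub>v n"
    then have "coef n U (col U j) j = 0" unfolding coef_def by simp
    then show False using coef_col_self[OF U j j] by simp
  qed
  then have "0 < Re (qform X (col U j))" using P vc by (auto simp: pos_def_def)
  also have "Re (qform X (col U j)) = d j" unfolding qf_decomp[OF D vc] using coef_self_sq[OF U j] .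
  finally show ?thesis .
qed

lemma hermitian_UDU:
  assumes U: "U \<in> carrier_mat n n"
  shows "hermitian n (U * mat_diag n (\<lambda>i. complex_of_real (f i)) * cadj U)"
proof -
  let ?M = "U * mat_diag n (\<lambda>i. complex_of_real (f i)) * cadj U"
  have Mc: "?M \<in> carrier_mat n n" using U by auto
  have "cadj ?M = ?M"
  proof (rule eq_matI)
    fix i k assume "i < dim_row ?M" "k < dim_col ?M"
    then have i: "i < n" and k: "k < n" using Mc by auto
    have "cadj ?M $$ (i,k) = cnj (?M $$ (k,i))" using i k Mc by auto
    also have "\<dots> = ?M $$ (i,k)" unfolding UDU_index[OF U k i] UDU_index[OF U i k]
      by (simp add: mult.commute mult.left_commute)
    finally show "cadj ?M $$ (i,k) = ?M $$ (i,k)" .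
  qed (use Mc in auto)
  then show ?thesis using Mc unfolding hermitian_def by auto
qed

lemma qf_UDU_lower:
  assumes U: "unitary n U" and f: "\<forall>j<n. \<gamma> \<le> f j" and v: "v \<in> carrier_vec n"
  shows "\<gamma> * (\<Sum>k<n. (cmod (v $ k))\<^sup>2) \<le> Re (qform (U * mat_diag n (\<lambda>i. complex_of_real (f i)) * cadj U) v)"
proof -
  have Uc: "U \<in> carrier_mat n n" using U by (simp add: unitary_def)
  have "\<gamma> * (\<Sum>k<n. (cmod (v $ k))\<^sup>2) = (\<Sum>j<n. \<gamma> * (cmod (coef n U v j))\<^sup>2)"
    unfolding coef_norm[OF U, symmetric] by (simp add: sum_distrib_left)
  also have "\<dots> \<le> (\<Sum>j<n. f j * (cmod (coef n U v j))\<^sup>2)"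
    using f by (intro sum_mono mult_right_mono) auto
  also have "\<dots> = Re (qform (U * mat_diag n (\<lambda>i. complex_of_real (f i)) * cadj U) v)"
    unfolding qform_UDU[OF Uc v] by (simp add: Re_sum)
  finally show ?thesis .
qed

lemma qform_minus:
  assumes X: "X \<in> carrier_mat n n" and Y: "Y \<in> carrier_mat n n" and v: "v \<in> carrier_vec n"
  shows "qform (X - Y) v = qform X v - qform Y v"
proof -
  have e: "(X - Y) *\<^sub>v v = X *\<^sub>v v - Y *\<^sub>v v" using X Y v by (rule minus_mult_distrib_mat_vec)
  have "qform (X - Y) v = (\<Sum>i<dim_vec v. (X *\<^sub>v v) $ i * cnj (v $ i) - (Y *\<^sub>v v) $ i * cnj (v $ i))"
    unfolding qform_def e using X Y v by (intro sum.cong refl) (auto simp: left_diff_distrib)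
  also have "\<dots> = qform X v - qform Y v" unfolding qform_def by (rule sum_subtractf)
  finally show ?thesis .
qed

lemma qform_smult_one:
  assumes v: "v \<in> carrier_vec n"
  shows "qform (c \<cdot>\<^sub>m 1\<^sub>m n) v = c * (\<Sum>k<n. complex_of_real ((cmod (v $ k))\<^sup>2))"
proof -
  have "\<And>i. i < n \<Longrightarrow> (c \<cdot>\<^sub>m 1\<^sub>m n *\<^sub>v v) $ i = c * v $ i"
  proof -
    fix i assume i: "i < n"
    have "(c \<cdot>\<^sub>m 1\<^sub>m n *\<^sub>v v) $ i = (\<Sum>k<n. (c * (if i = k then 1 else 0)) * v $ k)"
      using i v by (auto simp: scalar_prod_def atLeast0LessThan intro!: sum.cong)
    also have "\<dots> = (\<Sum>k<n. (if k = i then 1 else 0) * (c * v $ k))"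
      by (intro sum.cong) auto
    also have "\<dots> = c * v $ i" using sum_delta_left[OF i] .
    finally show "(c \<cdot>\<^sub>m 1\<^sub>m n *\<^sub>v v) $ i = c * v $ i" .
  qed
  then have "qform (c \<cdot>\<^sub>m 1\<^sub>m n) v = (\<Sum>i<n. c * (cnj (v $ i) * v $ i))"
    unfolding qform_def using v by (intro sum.cong) auto
  also have "\<dots> = c * (\<Sum>k<n. complex_of_real ((cmod (v $ k))\<^sup>2))"
    by (simp only: cnj_mult_self sum_distrib_left)
  finally show ?thesis .
qed

lemma hermitian_minus:
  assumes "hermitian n X" "hermitian n Y"
  shows "hermitian n (X - Y)"
proof -
  have Xc: "X \<in> carrier_mat n n" and Yc: "Y \<in> carrier_mat n n" using assms by (auto simp: hermitian_def)
  have "cadj (X - Y) = X - Y"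
  proof (rule eq_matI)
    fix i j assume "i < dim_row (X - Y)" "j < dim_col (X - Y)"
    then have i: "i < n" and j: "j < n" using Xc Yc by auto
    have "cadj (X - Y) $$ (i,j) = cnj (X $$ (j,i)) - cnj (Y $$ (j,i))" using Xc Yc i j by simp
    also have "cnj (X $$ (j,i)) = X $$ (i,j)" using hermitian_index[OF assms(1) j i] by simp
    also have "cnj (Y $$ (j,i)) = Y $$ (i,j)" using hermitian_index[OF assms(2) j i] by simp
    finally show "cadj (X - Y) $$ (i,j) = (X - Y) $$ (i,j)" using Xc Yc i j by simp
  qed (use Xc Yc in auto)
  then show ?thesis using Xc Yc unfolding hermitian_def by auto
qed

lemma Phi_minus:
  assumes L: "linear_map_mat k n \<Phi>" and X: "X \<in> carrier_mat k k" and Y: "Y \<in> carrier_mat k k"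
  shows "\<Phi> (X - Y) = \<Phi> X - \<Phi> Y"
proof -
  have "X - Y = X + (-1) \<cdot>\<^sub>m Y" using X Y by (intro eq_matI) auto
  then have "\<Phi> (X - Y) = \<Phi> X + \<Phi> ((-1) \<cdot>\<^sub>m Y)" using L X Y unfolding linear_map_mat_def by auto
  also have "\<Phi> ((-1) \<cdot>\<^sub>m Y) = (-1) \<cdot>\<^sub>m \<Phi> Y" using L Y unfolding linear_map_mat_def by auto
  also have "\<Phi> X + (-1) \<cdot>\<^sub>m \<Phi> Y = \<Phi> X - \<Phi> Y"
    using L X Y unfolding linear_map_mat_def by (intro eq_matI) auto
  finally show ?thesis .
qed

lemma Phi_mono:
  assumes L: "linear_map_mat k n \<Phi>" and P: "positive_map k n \<Phi>"
    and X: "hermitian k X" and Y: "hermitian k Y"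
    and le: "\<forall>v\<in>carrier_vec k. Re (qform X v) \<le> Re (qform Y v)"
    and v: "v \<in> carrier_vec n"
  shows "Re (qform (\<Phi> X) v) \<le> Re (qform (\<Phi> Y) v)"
proof -
  have Xc: "X \<in> carrier_mat k k" and Yc: "Y \<in> carrier_mat k k" using X Y by (auto simp: hermitian_def)
  have "pos_semidef k (Y - X)"
    unfolding pos_semidef_def using hermitian_minus[OF Y X] le qform_minus[OF Yc Xc] by auto
  then have "pos_semidef n (\<Phi> (Y - X))" using P by (auto simp: positive_map_def)
  then have "0 \<le> Re (qform (\<Phi> Y - \<Phi> X) v)" using v Phi_minus[OF L Yc Xc] by (auto simp: pos_semidef_def)
  moreover have "\<Phi> X \<in> carrier_mat n n" "\<Phi> Y \<in> carrier_mat n n" using L Xc Yc by (auto simp: linear_map_mat_def)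
  ultimately show ?thesis using qform_minus[OF _ _ v] by auto
qed

lemma hermitian_smult_one: "hermitian n (complex_of_real c \<cdot>\<^sub>m 1\<^sub>m n)"
  unfolding hermitian_def by (auto intro!: eq_matI simp: cadj_def)

lemma Phi_pos_def:
  assumes L: "linear_map_mat k n \<Phi>" and P: "positive_map k n \<Phi>" and Un: "unital_map k n \<Phi>"
    and U: "unitary k U" and f: "\<forall>j<k. 0 < f j"
  shows "pos_def n (\<Phi> (U * mat_diag k (\<lambda>i. complex_of_real (f i)) * cadj U))"
proof -
  let ?M = "U * mat_diag k (\<lambda>i. complex_of_real (f i)) * cadj U"
  have Uc: "U \<in> carrier_mat k k" using U by (simp add: unitary_def)
  define \<gamma> where "\<gamma> = Min (insert 1 (f ` {..<k}))"
  have gpos: "\<gamma> > 0" unfolding \<gamma>_def using f by (subst Min_gr_iff) auto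
  have gle: "\<forall>j<k. \<gamma> \<le> f j" unfolding \<gamma>_def by (auto intro: Min_le)
  have Mh: "hermitian k ?M" using hermitian_UDU[OF Uc] .
  have "pos_semidef k ?M" unfolding pos_semidef_def using Mh qf_UDU_lower[OF U, of 0 f] f
    by (auto simp: less_imp_le)
  then have "pos_semidef n (\<Phi> ?M)" using P by (auto simp: positive_map_def)
  then have Ph: "hermitian n (\<Phi> ?M)" by (simp add: pos_semidef_def)
  have le: "\<forall>v\<in>carrier_vec k. Re (qform (complex_of_real \<gamma> \<cdot>\<^sub>m 1\<^sub>m k) v) \<le> Re (qform ?M v)"
    using qf_UDU_lower[OF U gle] by (auto simp: qform_smult_one Re_sum)
  have Phi1: "\<Phi> (complex_of_real \<gamma> \<cdot>\<^sub>m 1\<^sub>m k) = complex_of_real \<gamma> \<cdot>\<^sub>m 1\<^sub>m n"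
    using L Un unfolding linear_map_mat_def unital_map_def by auto
  have "\<forall>v\<in>carrier_vec n. v \<noteq> 0\<^sub>v n \<longrightarrow> 0 < Re (qform (\<Phi> ?M) v)"
  proof (intro ballI impI)
    fix v :: "complex vec" assume v: "v \<in> carrier_vec n" and v0: "v \<noteq> 0\<^sub>v n"
    obtain i where i: "i < n" "v $ i \<noteq> 0" using v v0 by (metis eq_vecI carrier_vecD index_zero_vec(1) index_zero_vec(2))
    have "(cmod (v $ i))\<^sup>2 \<le> (\<Sum>k<n. (cmod (v $ k))\<^sup>2)" using i by (intro member_le_sum) auto
    moreover have "(cmod (v $ i))\<^sup>2 > 0" using i by simp
    ultimately have "0 < (\<Sum>k<n. (cmod (v $ k))\<^sup>2)" by linarith
    then have "0 < \<gamma> * (\<Sum>k<n. (cmod (v $ k))\<^sup>2)" using gpos by simp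
    also have "\<gamma> * (\<Sum>k<n. (cmod (v $ k))\<^sup>2) = Re (qform (\<Phi> (complex_of_real \<gamma> \<cdot>\<^sub>m 1\<^sub>m k)) v)"
      unfolding Phi1 qform_smult_one[OF v] by (simp add: Re_sum)
    also have "\<dots> \<le> Re (qform (\<Phi> ?M) v)"
      using Phi_mono[OF L P hermitian_smult_one Mh le v] .
    finally show "0 < Re (qform (\<Phi> ?M) v)" .
  qed
  then show ?thesis using Ph unfolding pos_def_def by auto
qed


section \<open>Operator monotonicity of powers (in eigen-coordinates)\<close>

lemma sum_weights_eq:
  assumes D: "spectral_decomp n A U a" and v: "v \<in> carrier_vec n"
  shows "(\<Sum>j<n. (cmod (coef n U v j))\<^sup>2) = (\<Sum>k<n. (cmod (v $ k))\<^sup>2)"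
  using coef_norm D by (auto simp: spectral_decomp_def)

lemma split_frac:
  assumes "s + a > (0::real)"
  shows "w * a / (s + a) = w - s * (w / (s + a))"
  using assms by (simp add: field_simps)

lemma LH_pos:
  assumes DA: "spectral_decomp n A UA a" and DC: "spectral_decomp n C UC c"
    and pa: "\<forall>j<n. 0 < a j" and pc: "\<forall>j<n. 0 < c j"
    and le: "\<forall>x\<in>carrier_vec n. Re (qform A x) \<le> Re (qform C x)"
    and v: "v \<in> carrier_vec n" and p0: "0 < p" and p1: "p \<le> 1"
  shows "(\<Sum>j<n. a j powr p * (cmod (coef n UA v j))\<^sup>2) \<le> (\<Sum>j<n. c j powr p * (cmod (coef n UC v j))\<^sup>2)"
proof (cases "p = 1")
  case True
  have "(\<Sum>j<n. a j powr p * (cmod (coef n UA v j))\<^sup>2) = Re (qform A v)"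
    unfolding qf_decomp[OF DA v] True using pa by (intro sum.cong) auto
  also have "\<dots> \<le> Re (qform C v)" using le v by auto
  also have "\<dots> = (\<Sum>j<n. c j powr p * (cmod (coef n UC v j))\<^sup>2)"
    unfolding qf_decomp[OF DC v] True using pc by (intro sum.cong) auto
  finally show ?thesis .
next
  case False
  then have p1': "p < 1" using p1 by auto
  let ?wA = "\<lambda>j. (cmod (coef n UA v j))\<^sup>2" and ?wC = "\<lambda>j. (cmod (coef n UC v j))\<^sup>2"
  have main: "(\<Sum>j\<in>{..<n}. (?wA j * a j) * a j powr (p - 1)) \<le> (\<Sum>j\<in>{..<n}. (?wC j * c j) * c j powr (p - 1))"
  proof (rule integral_compare)
    show "-1 < p - 1" "p - 1 < 0" using p0 p1' by auto
    show "\<forall>i\<in>{..<n}. 0 \<le> ?wA i * a i \<and> 0 < a i" using pa by auto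
    show "\<forall>i\<in>{..<n}. 0 \<le> ?wC i * c i \<and> 0 < c i" using pc by auto
    fix s :: real assume s: "s > 0"
    have pa': "\<forall>j<n. s + a j > 0" and pc': "\<forall>j<n. s + c j > 0" using pa pc s by (auto simp: add_pos_pos)
    have "(\<Sum>j\<in>{..<n}. ?wA j * a j / (s + a j)) = (\<Sum>j<n. ?wA j) - s * (\<Sum>j<n. ?wA j / (s + a j))"
      using pa' by (simp add: split_frac sum_subtractf sum_distrib_left)
    also have "\<dots> \<le> (\<Sum>j<n. ?wC j) - s * (\<Sum>j<n. ?wC j / (s + c j))"
      using resolvent_mono[OF DA DC pa' pc' le v] s sum_weights_eq[OF DA v] sum_weights_eq[OF DC v]
      by (simp add: mult_left_mono)
    also have "\<dots> = (\<Sum>j\<in>{..<n}. ?wC j * c j / (s + c j))"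
      using pc' by (simp add: split_frac sum_subtractf sum_distrib_left)
    finally show "(\<Sum>j\<in>{..<n}. ?wA j * a j / (s + a j)) \<le> (\<Sum>j\<in>{..<n}. ?wC j * c j / (s + c j))" .
  qed auto
  have eq: "\<And>f w. (\<forall>j<n. 0 < f j) \<Longrightarrow> (\<Sum>j\<in>{..<n}. (w j * f j) * f j powr (p - 1)) = (\<Sum>j<n. f j powr p * w j)"
  proof -
    fix f w :: "nat \<Rightarrow> real" assume f: "\<forall>j<n. 0 < f j"
    show "(\<Sum>j\<in>{..<n}. (w j * f j) * f j powr (p - 1)) = (\<Sum>j<n. f j powr p * w j)"
    proof (intro sum.cong refl)
      fix j assume "j \<in> {..<n}"
      then have fj: "f j > 0" using f by auto
      then have e: "f j * f j powr (p - 1) = f j powr p" by (simp add: powr_diff)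
      have "(w j * f j) * f j powr (p - 1) = (f j * f j powr (p - 1)) * w j" by (simp only: ac_simps)
      then show "(w j * f j) * f j powr (p - 1) = f j powr p * w j" unfolding e .
    qed
  qed
  show ?thesis using main unfolding eq[of a ?wA, OF pa] eq[of c ?wC, OF pc] .
qed

lemma LH_neg:
  assumes DA: "spectral_decomp n A UA a" and DC: "spectral_decomp n C UC c"
    and pa: "\<forall>j<n. 0 < a j" and pc: "\<forall>j<n. 0 < c j"
    and le: "\<forall>x\<in>carrier_vec n. Re (qform A x) \<le> Re (qform C x)"
    and v: "v \<in> carrier_vec n" and p0: "p < 0" and p1: "-1 \<le> p"
  shows "(\<Sum>j<n. c j powr p * (cmod (coef n UC v j))\<^sup>2) \<le> (\<Sum>j<n. a j powr p * (cmod (coef n UA v j))\<^sup>2)"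
proof (cases "p = -1")
  case True
  have pa': "\<forall>j<n. 0 + a j > 0" and pc': "\<forall>j<n. 0 + c j > 0" using pa pc by auto
  have "(\<Sum>j<n. c j powr p * (cmod (coef n UC v j))\<^sup>2) = (\<Sum>j<n. (cmod (coef n UC v j))\<^sup>2 / (0 + c j))"
    unfolding True using pc by (intro sum.cong) (auto simp: powr_minus_divide)
  also have "\<dots> \<le> (\<Sum>j<n. (cmod (coef n UA v j))\<^sup>2 / (0 + a j))"
    using resolvent_mono[OF DA DC pa' pc' le v] .
  also have "\<dots> = (\<Sum>j<n. a j powr p * (cmod (coef n UA v j))\<^sup>2)"
    unfolding True using pa by (intro sum.cong) (auto simp: powr_minus_divide)
  finally show ?thesis .
next
  case False
  then have p1': "-1 < p" using p1 by auto
  let ?wA = "\<lambda>j. (cmod (coef n UA v j))\<^sup>2" and ?wC = "\<lambda>j. (cmod (coef n UC v j))\<^sup>2"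
  have "(\<Sum>j\<in>{..<n}. ?wC j * c j powr p) \<le> (\<Sum>j\<in>{..<n}. ?wA j * a j powr p)"
  proof (rule integral_compare)
    show "-1 < p" "p < 0" using p0 p1' by auto
    show "\<forall>i\<in>{..<n}. 0 \<le> ?wC i \<and> 0 < c i" using pc by auto
    show "\<forall>i\<in>{..<n}. 0 \<le> ?wA i \<and> 0 < a i" using pa by auto
    fix s :: real assume s: "s > 0"
    have pa': "\<forall>j<n. s + a j > 0" and pc': "\<forall>j<n. s + c j > 0" using pa pc s by (auto simp: add_pos_pos)
    show "(\<Sum>j\<in>{..<n}. ?wC j / (s + c j)) \<le> (\<Sum>j\<in>{..<n}. ?wA j / (s + a j))"
      using resolvent_mono[OF DA DC pa' pc' le v] by simp
  qed auto
  then show ?thesis by (simp add: mult.commute)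
qed

section \<open>Trace monotonicity via Jensen\<close>

lemma trace_mono:
  assumes DY: "spectral_decomp n Y V mu" and DX: "spectral_decomp n X U la"
    and pmu: "\<forall>i<n. 0 < mu i" and pla: "\<forall>j<n. 0 < la j"
    and cvx: "convex_on {0<..} f"
    and le: "\<forall>v\<in>carrier_vec n. f (Re (qform Y v)) \<le> f (Re (qform X v))"
  shows "(\<Sum>i<n. f (mu i)) \<le> (\<Sum>j<n. f (la j))"
proof -
  have V: "unitary n V" and U: "unitary n U" using DY DX by (auto simp: spectral_decomp_def)
  have Vc: "V \<in> carrier_mat n n" and Uc: "U \<in> carrier_mat n n" using U V by (auto simp: unitary_def)
  define P where "P = (\<lambda>i j. (cmod (coef n U (col V i) j))\<^sup>2)"
  have colc: "\<And>i. i < n \<Longrightarrow> col V i \<in> carrier_vec n" using Vc by auto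
  have mu_eq: "\<And>i. i < n \<Longrightarrow> mu i = Re (qform Y (col V i))"
    using qf_decomp[OF DY colc] coef_self_sq[OF V] by simp
  have qX: "\<And>i. i < n \<Longrightarrow> Re (qform X (col V i)) = (\<Sum>j<n. P i j * la j)"
    unfolding P_def using qf_decomp[OF DX colc] by (simp add: mult.commute)
  have row1: "\<And>i. i < n \<Longrightarrow> (\<Sum>j<n. P i j) = 1"
  proof -
    fix i assume i: "i < n"
    have "(\<Sum>j<n. P i j) = (\<Sum>k<n. (cmod (col V i $ k))\<^sup>2)" unfolding P_def using coef_norm[OF U] .
    also have "\<dots> = (\<Sum>k<n. (cmod (V $$ (k,i)))\<^sup>2)" using Vc i by (intro sum.cong) auto
    also have "\<dots> = 1" using col_norm[OF V i] .
    finally show "(\<Sum>j<n. P i j) = 1" .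
  qed
  have col1: "\<And>j. j < n \<Longrightarrow> (\<Sum>i<n. P i j) = 1"
  proof -
    fix j assume j: "j < n"
    have "(\<Sum>i<n. P i j) = (\<Sum>i<n. (cmod (coef n V (col U j) i))\<^sup>2)"
      unfolding P_def using coef_col_swap[OF Uc Vc _ j] by (intro sum.cong) auto
    also have "\<dots> = (\<Sum>k<n. (cmod (col U j $ k))\<^sup>2)" using coef_norm[OF V] .
    also have "\<dots> = (\<Sum>k<n. (cmod (U $$ (k,j)))\<^sup>2)" using Uc j by (intro sum.cong) auto
    also have "\<dots> = 1" using col_norm[OF U j] .
    finally show "(\<Sum>i<n. P i j) = 1" .
  qed
  have "(\<Sum>i<n. f (mu i)) \<le> (\<Sum>i<n. f (Re (qform X (col V i))))"
    using le colc mu_eq by (intro sum_mono) auto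
  also have "\<dots> = (\<Sum>i<n. f (\<Sum>j<n. P i j * la j))" using qX by auto
  also have "\<dots> \<le> (\<Sum>i<n. \<Sum>j<n. P i j * f (la j))"
  proof (intro sum_mono)
    fix i assume "i \<in> {..<n}"
    then have i: "i < n" by auto
    have "f (\<Sum>j\<in>{..<n}. P i j *\<^sub>R la j) \<le> (\<Sum>j\<in>{..<n}. P i j * f (la j))"
      using i row1[OF i] pla by (intro convex_on_sum[OF _ _ cvx]) (auto simp: P_def)
    then show "f (\<Sum>j<n. P i j * la j) \<le> (\<Sum>j<n. P i j * f (la j))" by simp
  qed
  also have "\<dots> = (\<Sum>j<n. (\<Sum>i<n. P i j) * f (la j))"
    by (subst sum.swap) (simp add: sum_distrib_right)
  also have "\<dots> = (\<Sum>j<n. f (la j))" using col1 by simp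
  finally show ?thesis .
qed

lemma convex_powr_neg:
  assumes "q \<le> 0"
  shows "convex_on {0<..} (\<lambda>x::real. x powr q)"
proof (rule convex_on_realI[where f' = "\<lambda>x. q * x powr (q - 1)"])
  show "connected ({0<..} :: real set)" by simp
  fix x :: real assume "x \<in> {0<..}"
  then show "((\<lambda>x. x powr q) has_real_derivative q * x powr (q - 1)) (at x)"
    by (intro has_real_derivative_powr) auto
next
  fix x y :: real assume "x \<in> {0<..}" "y \<in> {0<..}" "x \<le> y"
  then have "y powr (q - 1) \<le> x powr (q - 1)" using assms by (intro powr_mono2') auto
  then show "q * x powr (q - 1) \<le> q * y powr (q - 1)" using assms by (intro mult_left_mono_neg) auto
qed


lemma qform_add:
  assumes X: "X \<in> carrier_mat n n" and Y: "Y \<in> carrier_mat n n" and v: "v \<in> carrier_vec n"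
  shows "qform (X + Y) v = qform X v + qform Y v"
proof -
  have e: "(X + Y) *\<^sub>v v = X *\<^sub>v v + Y *\<^sub>v v" using X Y v by (rule add_mult_distrib_mat_vec)
  have "qform (X + Y) v = (\<Sum>i<dim_vec v. (X *\<^sub>v v) $ i * cnj (v $ i) + (Y *\<^sub>v v) $ i * cnj (v $ i))"
    unfolding qform_def e using X Y v by (intro sum.cong refl) (auto simp: distrib_right)
  also have "\<dots> = qform X v + qform Y v" unfolding qform_def by (rule sum.distrib)
  finally show ?thesis .
qed

lemma hermitian_add:
  assumes "hermitian n X" "hermitian n Y"
  shows "hermitian n (X + Y)"
proof -
  have Xc: "X \<in> carrier_mat n n" and Yc: "Y \<in> carrier_mat n n" using assms by (auto simp: hermitian_def)
  have "cadj (X + Y) = X + Y"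
  proof (rule eq_matI)
    fix i j assume "i < dim_row (X + Y)" "j < dim_col (X + Y)"
    then have i: "i < n" and j: "j < n" using Xc Yc by auto
    have "cadj (X + Y) $$ (i,j) = cnj (X $$ (j,i)) + cnj (Y $$ (j,i))" using Xc Yc i j by simp
    also have "cnj (X $$ (j,i)) = X $$ (i,j)" using hermitian_index[OF assms(1) j i] by simp
    also have "cnj (Y $$ (j,i)) = Y $$ (i,j)" using hermitian_index[OF assms(2) j i] by simp
    finally show "cadj (X + Y) $$ (i,j) = (X + Y) $$ (i,j)" using Xc Yc i j by simp
  qed (use Xc Yc in auto)
  then show ?thesis using Xc Yc unfolding hermitian_def by auto
qed

lemma qform_zero: "qform X (0\<^sub>v n) = 0"
  by (simp add: qform_def)

lemma pd_nonneg:
  assumes "pos_def n X" "v \<in> carrier_vec n"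
  shows "0 \<le> Re (qform X v)"
proof (cases "v = 0\<^sub>v n")
  case True then show ?thesis by (simp add: qform_zero)
next
  case False then show ?thesis using assms by (auto simp: pos_def_def less_imp_le)
qed

lemma trace_powr:
  assumes "pos_def n X"
  shows "\<exists>U la. spectral_decomp n X U la \<and> (\<forall>j<n. 0 < la j) \<and> Re (mtrace (mat_powr X q)) = (\<Sum>j<n. la j powr q)"
proof -
  have Xh: "hermitian n X" using assms by (simp add: pos_def_def)
  obtain U la where D: "spectral_decomp n X U la"
    and M: "mat_powr X q = U * mat_diag n (\<lambda>i. complex_of_real (la i powr q)) * cadj U"
    using mat_powr_decomp[OF Xh] by blast
  have U: "unitary n U" using D by (simp add: spectral_decomp_def)
  have "Re (mtrace (mat_powr X q)) = (\<Sum>j<n. la j powr q)"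
    unfolding M mtrace_UDU[OF U] by (simp add: Re_sum)
  then show ?thesis using D decomp_pos[OF assms D] by blast
qed

theorem corollary4p1:
  fixes k n :: nat and A B :: "complex mat" and \<Phi> :: "complex mat \<Rightarrow> complex mat" and p :: real
  assumes "pos_def k A" and "pos_def k B"
    and "linear_map_mat k n \<Phi>" and "positive_map k n \<Phi>" and "unital_map k n \<Phi>"
    and "-1 \<le> p" and "p \<le> 1" and "p \<noteq> 0"
  shows "Re (mtrace (mat_powr (\<Phi> (mat_powr (A + B) p)) (-1/p)))
      \<le> Re (mtrace (mat_powr (\<Phi> (mat_powr A p)) (-1/p)))
       + Re (mtrace (mat_powr (\<Phi> (mat_powr B p)) (-1/p)))"
proof -
  note PA = assms(1) and PB = assms(2) and L = assms(3) and P = assms(4) and Un = assms(5)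
  have Ah: "hermitian k A" and Bh: "hermitian k B" using PA PB by (auto simp: pos_def_def)
  have Ac: "A \<in> carrier_mat k k" and Bc: "B \<in> carrier_mat k k" using Ah Bh by (auto simp: hermitian_def)
  define C where "C = A + B"
  have Ch: "hermitian k C" unfolding C_def using hermitian_add[OF Ah Bh] .
  have AleC: "\<forall>x\<in>carrier_vec k. Re (qform A x) \<le> Re (qform C x)"
    unfolding C_def using qform_add[OF Ac Bc] pd_nonneg[OF PB] by auto
  have PC: "pos_def k C" unfolding pos_def_def using Ch AleC PA
    by (auto simp: pos_def_def) (meson less_le_trans)
  obtain UA a where DA: "spectral_decomp k A UA a"
    and MA: "mat_powr A p = UA * mat_diag k (\<lambda>i. complex_of_real (a i powr p)) * cadj UA"
    using mat_powr_decomp[OF Ah] by blast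
  obtain UB b where DB: "spectral_decomp k B UB b"
    and MB: "mat_powr B p = UB * mat_diag k (\<lambda>i. complex_of_real (b i powr p)) * cadj UB"
    using mat_powr_decomp[OF Bh] by blast
  obtain UC c where DC: "spectral_decomp k C UC c"
    and MC: "mat_powr C p = UC * mat_diag k (\<lambda>i. complex_of_real (c i powr p)) * cadj UC"
    using mat_powr_decomp[OF Ch] by blast
  have pa: "\<forall>j<k. 0 < a j" using decomp_pos[OF PA DA] by auto
  have pb: "\<forall>j<k. 0 < b j" using decomp_pos[OF PB DB] by auto
  have pc: "\<forall>j<k. 0 < c j" using decomp_pos[OF PC DC] by auto
  have uA: "unitary k UA" and uB: "unitary k UB" and uC: "unitary k UC"
    using DA DB DC by (auto simp: spectral_decomp_def)
  have cA: "UA \<in> carrier_mat k k" and cB: "UB \<in> carrier_mat k k" and cC: "UC \<in> carrier_mat k k"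
    using uA uB uC by (auto simp: unitary_def)
  define XA where "XA = \<Phi> (mat_powr A p)"
  define XB where "XB = \<Phi> (mat_powr B p)"
  define XC where "XC = \<Phi> (mat_powr C p)"
  have XApd: "pos_def n XA" unfolding XA_def MA
    using Phi_pos_def[OF L P Un uA, of "\<lambda>i. a i powr p"] pa by (simp add: order_less_imp_not_eq2)
  have XBpd: "pos_def n XB" unfolding XB_def MB
    using Phi_pos_def[OF L P Un uB, of "\<lambda>i. b i powr p"] pb by (simp add: order_less_imp_not_eq2)
  have XCpd: "pos_def n XC" unfolding XC_def MC
    using Phi_pos_def[OF L P Un uC, of "\<lambda>i. c i powr p"] pc by (simp add: order_less_imp_not_eq2)
  have MAh: "hermitian k (mat_powr A p)" unfolding MA using hermitian_UDU[OF cA] .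
  have MCh: "hermitian k (mat_powr C p)" unfolding MC using hermitian_UDU[OF cC] .
  have qMA: "\<And>v. v \<in> carrier_vec k \<Longrightarrow> Re (qform (mat_powr A p) v) = (\<Sum>j<k. a j powr p * (cmod (coef k UA v j))\<^sup>2)"
    unfolding MA by (simp add: qform_UDU[OF cA] Re_sum)
  have qMC: "\<And>v. v \<in> carrier_vec k \<Longrightarrow> Re (qform (mat_powr C p) v) = (\<Sum>j<k. c j powr p * (cmod (coef k UC v j))\<^sup>2)"
    unfolding MC by (simp add: qform_UDU[OF cC] Re_sum)
  define q where "q = -1/p"
  obtain V mu where DY: "spectral_decomp n XC V mu" and pmu: "\<forall>j<n. 0 < mu j"
    and trC: "Re (mtrace (mat_powr XC q)) = (\<Sum>j<n. mu j powr q)"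
    using trace_powr[OF XCpd] by blast
  obtain U la where DX: "spectral_decomp n XA U la" and pla: "\<forall>j<n. 0 < la j"
    and trA: "Re (mtrace (mat_powr XA q)) = (\<Sum>j<n. la j powr q)"
    using trace_powr[OF XApd] by blast
  obtain W lb where "spectral_decomp n XB W lb" and "\<forall>j<n. 0 < lb j"
    and trB: "Re (mtrace (mat_powr XB q)) = (\<Sum>j<n. lb j powr q)"
    using trace_powr[OF XBpd] by blast
  have trB0: "0 \<le> Re (mtrace (mat_powr XB q))" unfolding trB by (auto intro: sum_nonneg)
  have main: "(\<Sum>j<n. mu j powr q) \<le> (\<Sum>j<n. la j powr q)"
  proof (cases "p > 0")
    case True
    have q0: "q \<le> 0" unfolding q_def using True by simp
    have LH: "\<forall>v\<in>carrier_vec k. Re (qform (mat_powr A p) v) \<le> Re (qform (mat_powr C p) v)"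
      using LH_pos[OF DA DC pa pc AleC _ True assms(7)] qMA qMC by auto
    have PM: "\<forall>v\<in>carrier_vec n. Re (qform XA v) \<le> Re (qform XC v)"
      unfolding XA_def XC_def using Phi_mono[OF L P MAh MCh LH] by auto
    have cond: "\<forall>v\<in>carrier_vec n. (Re (qform XC v)) powr q \<le> (Re (qform XA v)) powr q"
    proof
      fix v :: "complex vec" assume v: "v \<in> carrier_vec n"
      show "(Re (qform XC v)) powr q \<le> (Re (qform XA v)) powr q"
      proof (cases "v = 0\<^sub>v n")
        case True then show ?thesis by (simp add: qform_zero)
      next
        case False
        then have "0 < Re (qform XA v)" using XApd v by (auto simp: pos_def_def)
        then show ?thesis using PM v q0 by (intro powr_mono2') auto
      qed
    qed
    show ?thesis using trace_mono[OF DY DX pmu pla convex_powr_neg[OF q0] cond] .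
  next
    case False
    then have pneg: "p < 0" using assms(8) by auto
    have q1: "1 \<le> q" unfolding q_def using pneg assms(6) by (simp add: field_simps)
    have LH: "\<forall>v\<in>carrier_vec k. Re (qform (mat_powr C p) v) \<le> Re (qform (mat_powr A p) v)"
      using LH_neg[OF DA DC pa pc AleC _ pneg assms(6)] qMA qMC by auto
    have PM: "\<forall>v\<in>carrier_vec n. Re (qform XC v) \<le> Re (qform XA v)"
      unfolding XA_def XC_def using Phi_mono[OF L P MCh MAh LH] by auto
    have cond: "\<forall>v\<in>carrier_vec n. (Re (qform XC v)) powr q \<le> (Re (qform XA v)) powr q"
      using PM pd_nonneg[OF XCpd] q1 by (auto intro: powr_mono2)
    show ?thesis using trace_mono[OF DY DX pmu pla powr_convex[OF q1] cond] .
  qed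
  have "Re (mtrace (mat_powr XC q)) \<le> Re (mtrace (mat_powr XA q)) + Re (mtrace (mat_powr XB q))"
    using main trC trA trB0 by linarith
  then show ?thesis unfolding XA_def XB_def XC_def C_def q_def .
qed

end
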